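(* Let $u$, $\Phi_n=(\varphi_1,\ldots,\varphi_n)$ be a solution of the KdV equation with self-consistent sources of degree $n$, $$u_t+6uu_x+u_{xxx}+4\sum_{j=1}^n\varphi_j\varphi_{j,x}=0,\qquad \varphi_{j,xx}+(\lambda_j+u)\varphi_j=0,\ j=1,\ldots,n,$$ with distinct real constants $\lambda_j$. Let $\lambda_{n+1}\notin\{\lambda_1,\ldots,\lambda_n\}$ and let $f$ be a solution of the Lax system $$\phi_{xx}+(\lambda+u)\phi=0,\qquad \phi_t=A_n(\lambda,u,\Phi_n)\phi \tag{L$_n$}$$ with $\lambda=\lambda_{n+1}$ (belonging to a family $f(x,t;\xi)$ of solutions of (L$_n$) at $\lambda=\xi$ depending smoothly on $\xi$ near $\lambda_{n+1}$, so that $\omega(f,f)$ is defined). Let $e(t)$ be an arbitrary differentiable function and $\sqrt{e'(t)}$ a fixed smooth choice of square root. Define $$\bar\phi=\phi-\frac{f\,\omega(f,\phi)}{e(t)+\omega(f,f)},\quad \bar u=u+2\partial_x^2\ln[e(t)+\omega(f,f)],$$ $$\bar\varphi_j=\varphi_j-\frac{f\,\omega(f,\varphi_j)}{e(t)+\omega(f,f)}\ (j=1,\ldots,n),\qquad \bar\varphi_{n+1}=\frac{\sqrt{e'(t)}\,f}{e(t)+\omega(f,f)} .$$ Then for every solution $\phi$ of (L$_n$) with $\lambda\ne\lambda_{n+1}$, $\bar\phi$ satisfies $$\bar\phi_{xx}+(\lambda+\bar u)\bar\phi=0,\qquad \bar\phi_t=A_{n+1}(\lambda,\bar u,\bar\Phi_{n+1})\bar\phi,$$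 where $\bar\Phi_{n+1}=(\bar\varphi_1,\ldots,\bar\varphi_{n+1})$, and $\bar u,\bar\Phi_{n+1}$ satisfy the KdV equation with sources of degree $n+1$: $$\bar u_t+6\bar u\bar u_x+\bar u_{xxx}+4\sum_{j=1}^{n+1}\bar\varphi_j\bar\varphi_{j,x}=0,\qquad \bar\varphi_{j,xx}+(\lambda_j+\bar u)\bar\varphi_j=0,\ j=1,\ldots,n+1.$$
   Context: $W(g,h)=g h_x-g_x h$ denotes the Wronskian. For a spectral parameter $\lambda$ and $\Phi_m=(\varphi_1,\ldots,\varphi_m)$ with $\varphi_j$ associated to $\lambda_j$, $$A_m(\lambda,u,\Phi_m)\phi=u_x\phi+(4\lambda-2u)\phi_x+\sum_{j=1}^m\frac{\varphi_j}{\lambda_j-\lambda}W(\varphi_j,\phi).$$ If $f$ solves $f_{xx}+(\xi+u)f=0$ and $g$ solves $g_{xx}+(\eta+u)g=0$ with $\eta\neq\xi$, then $\omega(f,g)=\dfrac{W(f,g)}{\xi-\eta}$. If $f=f(x,t;\xi)$ depends smoothly on $\xi$, then $\omega(f,f)=\lim_{\eta\to\xi}\frac{W(f(\xi),f(\eta))}{\xi-\eta}=-W(f,\partial_\xi f)$. All identities are understood on the set where $e(t)+\omega(f,f)\neq0$. *)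

theory Defs
  imports "HOL-Analysis.Analysis"
begin

type_synonym fn2 = "real \<Rightarrow> real \<Rightarrow> real"   (* functions of (x,t) *)

definition px :: "fn2 \<Rightarrow> fn2" where
  "px f = (\<lambda>x t. deriv (\<lambda>y. f y t) x)"

definition pt :: "fn2 \<Rightarrow> fn2" where
  "pt f = (\<lambda>x t. deriv (\<lambda>s. f x s) t)"

fun iter2 :: "bool list \<Rightarrow> fn2 \<Rightarrow> fn2" where
  "iter2 [] f = f"
| "iter2 (b # ws) f = (if b then px else pt) (iter2 ws f)"

definition smooth2 :: "fn2 \<Rightarrow> bool" where
  "smooth2 f \<longleftrightarrow> (\<forall>ws. (\<lambda>p::real \<times> real. iter2 ws f (fst p) (snd p)) differentiable_on UNIV)"

type_synonym fn3 = "real \<Rightarrow> real \<Rightarrow> real \<Rightarrow> real"  (* functions of (xi,x,t) *)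

definition pxi3 :: "fn3 \<Rightarrow> fn3" where
  "pxi3 F = (\<lambda>\<xi> x t. deriv (\<lambda>\<eta>. F \<eta> x t) \<xi>)"
definition px3 :: "fn3 \<Rightarrow> fn3" where
  "px3 F = (\<lambda>\<xi> x t. deriv (\<lambda>y. F \<xi> y t) x)"
definition pt3 :: "fn3 \<Rightarrow> fn3" where
  "pt3 F = (\<lambda>\<xi> x t. deriv (\<lambda>s. F \<xi> x s) t)"

fun iter3 :: "nat list \<Rightarrow> fn3 \<Rightarrow> fn3" where
  "iter3 [] F = F"
| "iter3 (k # ws) F = (if k = 0 then pxi3 else if k = 1 then px3 else pt3) (iter3 ws F)"

definition smooth3_on :: "real set \<Rightarrow> fn3 \<Rightarrow> bool" where
  "smooth3_on S F \<longleftrightarrow>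
     (\<forall>ws. (\<lambda>p::real \<times> real \<times> real. iter3 ws F (fst p) (fst (snd p)) (snd (snd p)))
              differentiable_on (S \<times> UNIV \<times> UNIV))"

definition smooth1 :: "(real \<Rightarrow> real) \<Rightarrow> bool" where
  "smooth1 g \<longleftrightarrow> (\<forall>k t. (deriv ^^ k) g differentiable at t)"

definition Wr :: "fn2 \<Rightarrow> fn2 \<Rightarrow> fn2" where
  "Wr g h = (\<lambda>x t. g x t * px h x t - px g x t * h x t)"

text \<open>A_m(lambda,u,Phi_m) phi, with Phi_m given by Phi j, j = 1..m, and lambda_j = lam j.\<close>
definition Aop :: "nat \<Rightarrow> (nat \<Rightarrow> real) \<Rightarrow> real \<Rightarrow> fn2 \<Rightarrow> (nat \<Rightarrow> fn2) \<Rightarrow> fn2 \<Rightarrow> fn2" where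
  "Aop m lam lm u Phi \<phi> = (\<lambda>x t. px u x t * \<phi> x t + (4 * lm - 2 * u x t) * px \<phi> x t
      + (\<Sum>j = 1..m. Phi j x t / (lam j - lm) * Wr (Phi j) \<phi> x t))"

definition lax_sys_on :: "(real \<times> real) set \<Rightarrow> nat \<Rightarrow> (nat \<Rightarrow> real) \<Rightarrow> fn2 \<Rightarrow> (nat \<Rightarrow> fn2) \<Rightarrow> real \<Rightarrow> fn2 \<Rightarrow> bool" where
  "lax_sys_on U m lam u Phi lm \<phi> \<longleftrightarrow>
     (\<forall>x t. (x, t) \<in> U \<longrightarrow>
        px (px \<phi>) x t + (lm + u x t) * \<phi> x t = 0 \<and>
        pt \<phi> x t = Aop m lam lm u Phi \<phi> x t)"

definition kdvs_on :: "(real \<times> real) set \<Rightarrow> nat \<Rightarrow> (nat \<Rightarrow> real) \<Rightarrow> fn2 \<Rightarrow> (nat \<Rightarrow> fn2) \<Rightarrow> bool" where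
  "kdvs_on U m lam u Phi \<longleftrightarrow>
     (\<forall>x t. (x, t) \<in> U \<longrightarrow>
        pt u x t + 6 * u x t * px u x t + px (px (px u)) x t
          + 4 * (\<Sum>j = 1..m. Phi j x t * px (Phi j) x t) = 0 \<and>
        (\<forall>j \<in> {1..m}. px (px (Phi j)) x t + (lam j + u x t) * Phi j x t = 0))"

end

theory Submission
  imports Defs "HOL-Analysis.Analysis"
begin


lemma spatial_alg:
  fixes u0 k mu f0 f1 h0 h1 D w :: real
  assumes "D \<noteq> 0" "w * (k - mu) = f0*h1 - f1*h0"
  shows "(- (3 * f0 * f1 * h0) / D + (f0 * k * w) / D + (f0 * u0 * w) / D - ((f0)^2 * h1) / D + (4 * (f0)^2 * f1 * w) / D^2 + (2 * (f0)^4 * h0) / D^2 - (2 * (f0)^5 * w) / D^3 - h0 * mu - h0 * u0) + (mu + (u0 + 4 * f0 * f1 / D - 2 * f0^4 / D^2)) * (h0 - f0 * w / D) = 0"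
proof -
  define Di where "Di = inverse D"
  have i: "D * Di = 1" using assms unfolding Di_def by simp
  show ?thesis using i assms(2) unfolding divide_inverse power_inverse[symmetric] Di_def[symmetric] by algebra
qed

lemma spatialp_alg:
  fixes u0 k f0 f1 D s :: real
  assumes "D \<noteq> 0"
  shows "(- (f0 * k * s) / D - (f0 * s * u0) / D - (4 * (f0)^2 * f1 * s) / D^2 + (2 * (f0)^5 * s) / D^3) + (k + (u0 + 4 * f0 * f1 / D - 2 * f0^4 / D^2)) * (s * f0 / D) = 0"
proof -
  define Di where "Di = inverse D"
  have i: "D * Di = 1" using assms unfolding Di_def by simp
  show ?thesis unfolding divide_inverse power_inverse[symmetric] Di_def[symmetric] by algebra
qed

lemma wt_alg:
  fixes u0 u1 u2 u3 k mu f0 f1 g0 g1 h0 h1 D w s :: real and P Q L :: "nat \<Rightarrow> real" and A :: "nat set"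
  assumes km: "k \<noteq> mu" and LA: "\<forall>j\<in>A. L j \<noteq> k \<and> L j \<noteq> mu" and nz: "k - mu \<noteq> 0" and ex: "True"
  shows "((u1 * f0 + (4 * k - 2 * u0) * f1 + (\<Sum>j\<in>A. P j / (L j - k) * (P j * f1 - Q j * f0))) * h1 + f0 * (u2 * h0 - u1 * h1 - (4 * mu - 2 * u0) * (mu + u0) * h0 + (\<Sum>j\<in>A. Q j / (L j - mu) * (P j * h1 - Q j * h0) + P j ^ 2 * h0)) - (u2 * f0 - u1 * f1 - (4 * k - 2 * u0) * (k + u0) * f0 + (\<Sum>j\<in>A. Q j / (L j - k) * (P j * f1 - Q j * f0) + P j ^ 2 * f0)) * h0 - f1 * (u1 * h0 + (4 * mu - 2 * u0) * h1 + (\<Sum>j\<in>A. P j / (L j - mu) * (P j * h1 - Q j * h0)))) / (k - mu) = (4 * f1 * h1 + (4 * k + 4 * mu + 2 * u0) * f0 * h0 + (\<Sum>j\<in>A. ((f0 * Q j - f1 * P j) / (k - L j)) * ((P j * h1 - Q j * h0) / (L j - mu))))"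
proof -
  define ki where "ki = inverse (k - mu)"
  have rki: "(k - mu) * ki = 1" using nz unfolding ki_def by simp
  have T: "\<forall>j\<in>A. (h1 / (k - mu)) * (P j / (L j - k) * (P j * f1 - Q j * f0)) + (f0 / (k - mu)) * (Q j / (L j - mu) * (P j * h1 - Q j * h0) + P j ^ 2 * h0) + (- h0 / (k - mu)) * (Q j / (L j - k) * (P j * f1 - Q j * f0) + P j ^ 2 * f0) + (- f1 / (k - mu)) * (P j / (L j - mu) * (P j * h1 - Q j * h0)) + (-1) * (((f0 * Q j - f1 * P j) / (k - L j)) * ((P j * h1 - Q j * h0) / (L j - mu))) = 0"
  proof
    fix j assume "j \<in> A"
    then have jnz: "L j - k \<noteq> 0" "L j - mu \<noteq> 0" "k - L j \<noteq> 0" using LA by auto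
    define ja where "ja = inverse (L j - k)"
    have rja: "(L j - k) * ja = 1" using jnz unfolding ja_def by simp
    define jb where "jb = inverse (L j - mu)"
    have rjb: "(L j - mu) * jb = 1" using jnz unfolding jb_def by simp
    define jc where "jc = inverse (k - L j)"
    have rjc: "(k - L j) * jc = 1" using jnz unfolding jc_def by simp
    show "(h1 / (k - mu)) * (P j / (L j - k) * (P j * f1 - Q j * f0)) + (f0 / (k - mu)) * (Q j / (L j - mu) * (P j * h1 - Q j * h0) + P j ^ 2 * h0) + (- h0 / (k - mu)) * (Q j / (L j - k) * (P j * f1 - Q j * f0) + P j ^ 2 * f0) + (- f1 / (k - mu)) * (P j / (L j - mu) * (P j * h1 - Q j * h0)) + (-1) * (((f0 * Q j - f1 * P j) / (k - L j)) * ((P j * h1 - Q j * h0) / (L j - mu))) = 0" unfolding divide_inverse power_inverse[symmetric] ki_def[symmetric] ja_def[symmetric] jb_def[symmetric] jc_def[symmetric] by (algebra | use rki rja rjb rjc ex in algebra)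
  qed
  have C: "((u1 * f0 + (4 * k - 2 * u0) * f1 + 0) * h1 + f0 * (u2 * h0 - u1 * h1 - (4 * mu - 2 * u0) * (mu + u0) * h0 + 0) - (u2 * f0 - u1 * f1 - (4 * k - 2 * u0) * (k + u0) * f0 + 0) * h0 - f1 * (u1 * h0 + (4 * mu - 2 * u0) * h1 + 0)) / (k - mu) = (4 * f1 * h1 + (4 * k + 4 * mu + 2 * u0) * f0 * h0 + 0)" unfolding divide_inverse power_inverse[symmetric] ki_def[symmetric] by (algebra | use rki ex in algebra)
  have "(\<Sum>j\<in>A. (h1 / (k - mu)) * (P j / (L j - k) * (P j * f1 - Q j * f0)) + (f0 / (k - mu)) * (Q j / (L j - mu) * (P j * h1 - Q j * h0) + P j ^ 2 * h0) + (- h0 / (k - mu)) * (Q j / (L j - k) * (P j * f1 - Q j * f0) + P j ^ 2 * f0) + (- f1 / (k - mu)) * (P j / (L j - mu) * (P j * h1 - Q j * h0)) + (-1) * (((f0 * Q j - f1 * P j) / (k - L j)) * ((P j * h1 - Q j * h0) / (L j - mu)))) = 0" using T by simp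
  moreover have "(h1 / (k - mu)) * (\<Sum>j\<in>A. P j / (L j - k) * (P j * f1 - Q j * f0)) + (f0 / (k - mu)) * (\<Sum>j\<in>A. Q j / (L j - mu) * (P j * h1 - Q j * h0) + P j ^ 2 * h0) + (- h0 / (k - mu)) * (\<Sum>j\<in>A. Q j / (L j - k) * (P j * f1 - Q j * f0) + P j ^ 2 * f0) + (- f1 / (k - mu)) * (\<Sum>j\<in>A. P j / (L j - mu) * (P j * h1 - Q j * h0)) + (-1) * (\<Sum>j\<in>A. ((f0 * Q j - f1 * P j) / (k - L j)) * ((P j * h1 - Q j * h0) / (L j - mu))) = (\<Sum>j\<in>A. (h1 / (k - mu)) * (P j / (L j - k) * (P j * f1 - Q j * f0)) + (f0 / (k - mu)) * (Q j / (L j - mu) * (P j * h1 - Q j * h0) + P j ^ 2 * h0) + (- h0 / (k - mu)) * (Q j / (L j - k) * (P j * f1 - Q j * f0) + P j ^ 2 * f0) + (- f1 / (k - mu)) * (P j / (L j - mu) * (P j * h1 - Q j * h0)) + (-1) * (((f0 * Q j - f1 * P j) / (k - L j)) * ((P j * h1 - Q j * h0) / (L j - mu))))" by (simp only: sum.distrib sum_distrib_left[symmetric])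
  ultimately have lin: "(h1 / (k - mu)) * (\<Sum>j\<in>A. P j / (L j - k) * (P j * f1 - Q j * f0)) + (f0 / (k - mu)) * (\<Sum>j\<in>A. Q j / (L j - mu) * (P j * h1 - Q j * h0) + P j ^ 2 * h0) + (- h0 / (k - mu)) * (\<Sum>j\<in>A. Q j / (L j - k) * (P j * f1 - Q j * f0) + P j ^ 2 * f0) + (- f1 / (k - mu)) * (\<Sum>j\<in>A. P j / (L j - mu) * (P j * h1 - Q j * h0)) + (-1) * (\<Sum>j\<in>A. ((f0 * Q j - f1 * P j) / (k - L j)) * ((P j * h1 - Q j * h0) / (L j - mu))) = 0" by simp
  show ?thesis using C lin rki ex unfolding divide_inverse power_inverse[symmetric] ki_def[symmetric] by algebra
qed

lemma wff_alg:
  fixes u0 u1 u2 u3 k mu f0 f1 g0 g1 h0 h1 D w s :: real and P Q L :: "nat \<Rightarrow> real" and A :: "nat set"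
  assumes LA: "\<forall>j\<in>A. L j \<noteq> k" and nz: "True" and ex: "True"
  shows "- ((u1 * f0 + (4 * k - 2 * u0) * f1 + (\<Sum>j\<in>A. P j / (L j - k) * (P j * f1 - Q j * f0))) * g1 + f0 * (u2 * g0 - u1 * g1 - (4 * k - 2 * u0) * (f0 + (k + u0) * g0) - 4 * (k + u0) * f0 + (\<Sum>j\<in>A. Q j / (L j - k) * (P j * g1 - Q j * g0) + Q j / (L j - k)^2 * (P j * f1 - Q j * f0) + P j ^ 2 * g0)) - (u2 * f0 - u1 * f1 - (4 * k - 2 * u0) * (k + u0) * f0 + (\<Sum>j\<in>A. Q j / (L j - k) * (P j * f1 - Q j * f0) + P j ^ 2 * f0)) * g0 - f1 * (u1 * g0 + (4 * k - 2 * u0) * g1 + 4 * f1 + (\<Sum>j\<in>A. P j / (L j - k) * (P j * g1 - Q j * g0) + P j / (L j - k)^2 * (P j * f1 - Q j * f0)))) = 4 * f1^2 + (8 * k + 2 * u0) * f0^2 + (\<Sum>j\<in>A. ((f0 * Q j - f1 * P j) / (k - L j)) ^ 2)"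
proof -
  have T: "\<forall>j\<in>A. (- g1) * (P j / (L j - k) * (P j * f1 - Q j * f0)) + (- f0) * (Q j / (L j - k) * (P j * g1 - Q j * g0) + Q j / (L j - k)^2 * (P j * f1 - Q j * f0) + P j ^ 2 * g0) + (g0) * (Q j / (L j - k) * (P j * f1 - Q j * f0) + P j ^ 2 * f0) + (f1) * (P j / (L j - k) * (P j * g1 - Q j * g0) + P j / (L j - k)^2 * (P j * f1 - Q j * f0)) + (-1) * (((f0 * Q j - f1 * P j) / (k - L j)) ^ 2) = 0"
  proof
    fix j assume "j \<in> A"
    then have jnz: "L j - k \<noteq> 0" "k - L j \<noteq> 0" using LA by auto
    define ja where "ja = inverse (L j - k)"
    have rja: "(L j - k) * ja = 1" using jnz unfolding ja_def by simp
    define jb where "jb = inverse (k - L j)"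
    have rjb: "(k - L j) * jb = 1" using jnz unfolding jb_def by simp
    show "(- g1) * (P j / (L j - k) * (P j * f1 - Q j * f0)) + (- f0) * (Q j / (L j - k) * (P j * g1 - Q j * g0) + Q j / (L j - k)^2 * (P j * f1 - Q j * f0) + P j ^ 2 * g0) + (g0) * (Q j / (L j - k) * (P j * f1 - Q j * f0) + P j ^ 2 * f0) + (f1) * (P j / (L j - k) * (P j * g1 - Q j * g0) + P j / (L j - k)^2 * (P j * f1 - Q j * f0)) + (-1) * (((f0 * Q j - f1 * P j) / (k - L j)) ^ 2) = 0" unfolding divide_inverse power_inverse[symmetric]  ja_def[symmetric] jb_def[symmetric] by (algebra | use  rja rjb ex in algebra)
  qed
  have C: "- ((u1 * f0 + (4 * k - 2 * u0) * f1 + 0) * g1 + f0 * (u2 * g0 - u1 * g1 - (4 * k - 2 * u0) * (f0 + (k + u0) * g0) - 4 * (k + u0) * f0 + 0) - (u2 * f0 - u1 * f1 - (4 * k - 2 * u0) * (k + u0) * f0 + 0) * g0 - f1 * (u1 * g0 + (4 * k - 2 * u0) * g1 + 4 * f1 + 0)) = 4 * f1^2 + (8 * k + 2 * u0) * f0^2 + 0" unfolding divide_inverse power_inverse[symmetric]  by (algebra | use  ex in algebra)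
  have "(\<Sum>j\<in>A. (- g1) * (P j / (L j - k) * (P j * f1 - Q j * f0)) + (- f0) * (Q j / (L j - k) * (P j * g1 - Q j * g0) + Q j / (L j - k)^2 * (P j * f1 - Q j * f0) + P j ^ 2 * g0) + (g0) * (Q j / (L j - k) * (P j * f1 - Q j * f0) + P j ^ 2 * f0) + (f1) * (P j / (L j - k) * (P j * g1 - Q j * g0) + P j / (L j - k)^2 * (P j * f1 - Q j * f0)) + (-1) * (((f0 * Q j - f1 * P j) / (k - L j)) ^ 2)) = 0" using T by simp
  moreover have "(- g1) * (\<Sum>j\<in>A. P j / (L j - k) * (P j * f1 - Q j * f0)) + (- f0) * (\<Sum>j\<in>A. Q j / (L j - k) * (P j * g1 - Q j * g0) + Q j / (L j - k)^2 * (P j * f1 - Q j * f0) + P j ^ 2 * g0) + (g0) * (\<Sum>j\<in>A. Q j / (L j - k) * (P j * f1 - Q j * f0) + P j ^ 2 * f0) + (f1) * (\<Sum>j\<in>A. P j / (L j - k) * (P j * g1 - Q j * g0) + P j / (L j - k)^2 * (P j * f1 - Q j * f0)) + (-1) * (\<Sum>j\<in>A. ((f0 * Q j - f1 * P j) / (k - L j)) ^ 2) = (\<Sum>j\<in>A. (- g1) * (P j / (L j - k) * (P j * f1 - Q j * f0)) + (- f0) * (Q j / (L j - k) * (P j * g1 - Q j * g0) + Q j / (L j - k)^2 * (P j * f1 - Q j * f0) + P j ^ 2 * g0) + (g0) * (Q j / (L j - k) * (P j * f1 - Q j * f0) + P j ^ 2 * f0) + (f1) * (P j / (L j - k) * (P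 j * g1 - Q j * g0) + P j / (L j - k)^2 * (P j * f1 - Q j * f0)) + (-1) * (((f0 * Q j - f1 * P j) / (k - L j)) ^ 2))" by (simp only: sum.distrib sum_distrib_left[symmetric])
  ultimately have lin: "(- g1) * (\<Sum>j\<in>A. P j / (L j - k) * (P j * f1 - Q j * f0)) + (- f0) * (\<Sum>j\<in>A. Q j / (L j - k) * (P j * g1 - Q j * g0) + Q j / (L j - k)^2 * (P j * f1 - Q j * f0) + P j ^ 2 * g0) + (g0) * (\<Sum>j\<in>A. Q j / (L j - k) * (P j * f1 - Q j * f0) + P j ^ 2 * f0) + (f1) * (\<Sum>j\<in>A. P j / (L j - k) * (P j * g1 - Q j * g0) + P j / (L j - k)^2 * (P j * f1 - Q j * f0)) + (-1) * (\<Sum>j\<in>A. ((f0 * Q j - f1 * P j) / (k - L j)) ^ 2) = 0" by simp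
  show ?thesis using C lin  ex unfolding divide_inverse power_inverse[symmetric]  by algebra
qed

lemma laxt_alg:
  fixes u0 u1 u2 u3 k mu f0 f1 g0 g1 h0 h1 D w s :: real and P Q L :: "nat \<Rightarrow> real" and A :: "nat set"
  assumes km: "k \<noteq> mu" and LA: "\<forall>j\<in>A. L j \<noteq> k \<and> L j \<noteq> mu" and nz: "D \<noteq> 0" "k - mu \<noteq> 0" and ex: "w * (k - mu) = f0*h1 - f1*h0"
  shows "(u1 * h0 + (4 * mu - 2 * u0) * h1 + (\<Sum>j\<in>A. P j / (L j - mu) * (P j * h1 - Q j * h0))) - ((u1 * f0 + (4 * k - 2 * u0) * f1 + (\<Sum>j\<in>A. P j / (L j - k) * (P j * f1 - Q j * f0))) * w + f0 * (4 * f1 * h1 + (4 * k + 4 * mu + 2 * u0) * f0 * h0 + (\<Sum>j\<in>A. ((f0 * Q j - f1 * P j) / (k - L j)) * ((P j * h1 - Q j * h0) / (L j - mu))))) / D + f0 * w * (s^2 + 4 * f1^2 + (8 * k + 2 * u0) * f0^2 + (\<Sum>j\<in>A. ((f0 * Q j - f1 * P j) / (k - L j)) ^ 2)) / D^2 = (- (4 * (f0)^2 * k) / D - (4 * (f0)^2 * u0) / D + (4 * (f1)^2) / D - (12 * (f0)^3 * f1) / D^2 + (4 * (f0)^6) / D^3 + u1) * (h0 - f0 * w / D) + (4 * mu - 2 * (u0 + 4 * f0 * f1 / D - 2 * f0^4 / D^2)) * (- ((f0)^2 * h0) / D - (f1 * w) / D + ((f0)^3 * w) / D^2 + h1) + (\<Sum>j\<in>A.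 (P j - f0 * ((f0 * Q j - f1 * P j) / (k - L j)) / D) / (L j - mu) * ((P j - f0 * ((f0 * Q j - f1 * P j) / (k - L j)) / D) * (- ((f0)^2 * h0) / D - (f1 * w) / D + ((f0)^3 * w) / D^2 + h1) - (- ((f0)^2 * P j) / D - (f1 * ((f0 * Q j - f1 * P j) / (k - L j))) / D + ((f0)^3 * ((f0 * Q j - f1 * P j) / (k - L j))) / D^2 + Q j) * (h0 - f0 * w / D))) + (s * f0 / D) / (k - mu) * ((s * f0 / D) * (- ((f0)^2 * h0) / D - (f1 * w) / D + ((f0)^3 * w) / D^2 + h1) - ((f1 * s) / D - ((f0)^3 * s) / D^2) * (h0 - f0 * w / D))"
proof -
  define Di where "Di = inverse (D)"
  have rDi: "(D) * Di = 1" using nz unfolding Di_def by simp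
  define ki where "ki = inverse (k - mu)"
  have rki: "(k - mu) * ki = 1" using nz unfolding ki_def by simp
  have T: "\<forall>j\<in>A. (1) * (P j / (L j - mu) * (P j * h1 - Q j * h0)) + (- w / D) * (P j / (L j - k) * (P j * f1 - Q j * f0)) + (- f0 / D) * (((f0 * Q j - f1 * P j) / (k - L j)) * ((P j * h1 - Q j * h0) / (L j - mu))) + (f0 * w / D^2) * (((f0 * Q j - f1 * P j) / (k - L j)) ^ 2) + (-1) * ((P j - f0 * ((f0 * Q j - f1 * P j) / (k - L j)) / D) / (L j - mu) * ((P j - f0 * ((f0 * Q j - f1 * P j) / (k - L j)) / D) * (- ((f0)^2 * h0) / D - (f1 * w) / D + ((f0)^3 * w) / D^2 + h1) - (- ((f0)^2 * P j) / D - (f1 * ((f0 * Q j - f1 * P j) / (k - L j))) / D + ((f0)^3 * ((f0 * Q j - f1 * P j) / (k - L j))) / D^2 + Q j) * (h0 - f0 * w / D))) = 0"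
  proof
    fix j assume "j \<in> A"
    then have jnz: "L j - k \<noteq> 0" "L j - mu \<noteq> 0" "k - L j \<noteq> 0" using LA by auto
    define ja where "ja = inverse (L j - k)"
    have rja: "(L j - k) * ja = 1" using jnz unfolding ja_def by simp
    define jb where "jb = inverse (L j - mu)"
    have rjb: "(L j - mu) * jb = 1" using jnz unfolding jb_def by simp
    define jc where "jc = inverse (k - L j)"
    have rjc: "(k - L j) * jc = 1" using jnz unfolding jc_def by simp
    show "(1) * (P j / (L j - mu) * (P j * h1 - Q j * h0)) + (- w / D) * (P j / (L j - k) * (P j * f1 - Q j * f0)) + (- f0 / D) * (((f0 * Q j - f1 * P j) / (k - L j)) * ((P j * h1 - Q j * h0) / (L j - mu))) + (f0 * w / D^2) * (((f0 * Q j - f1 * P j) / (k - L j)) ^ 2) + (-1) * ((P j - f0 * ((f0 * Q j - f1 * P j) / (k - L j)) / D) / (L j - mu) * ((P j - f0 * ((f0 * Q j - f1 * P j) / (k - L j)) / D) * (- ((f0)^2 * h0) / D - (f1 * w) / D + ((f0)^3 * w) / D^2 + h1) - (- ((f0)^2 * P j) / D - (f1 * ((f0 * Q j - f1 * P j) / (k - L j))) / D + ((f0)^3 * ((f0 * Q j - f1 * P j) / (k - L j))) / D^2 + Q j) * (h0 - f0 * w / D))) = 0" unfolding divide_inverse power_inverse[symmetric] Di_def[symmetric] ki_def[symmetric] ja_def[symmetric] jb_def[symmetric] jc_def[symmetric] by (algebra | use rDi rki rja rjb rjc ex in algebra)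
  qed
  have C: "(u1 * h0 + (4 * mu - 2 * u0) * h1 + 0) - ((u1 * f0 + (4 * k - 2 * u0) * f1 + 0) * w + f0 * (4 * f1 * h1 + (4 * k + 4 * mu + 2 * u0) * f0 * h0 + 0)) / D + f0 * w * (s^2 + 4 * f1^2 + (8 * k + 2 * u0) * f0^2 + 0) / D^2 = (- (4 * (f0)^2 * k) / D - (4 * (f0)^2 * u0) / D + (4 * (f1)^2) / D - (12 * (f0)^3 * f1) / D^2 + (4 * (f0)^6) / D^3 + u1) * (h0 - f0 * w / D) + (4 * mu - 2 * (u0 + 4 * f0 * f1 / D - 2 * f0^4 / D^2)) * (- ((f0)^2 * h0) / D - (f1 * w) / D + ((f0)^3 * w) / D^2 + h1) + 0 + (s * f0 / D) / (k - mu) * ((s * f0 / D) * (- ((f0)^2 * h0) / D - (f1 * w) / D + ((f0)^3 * w) / D^2 + h1) - ((f1 * s) / D - ((f0)^3 * s) / D^2) * (h0 - f0 * w / D))" unfolding divide_inverse power_inverse[symmetric] Di_def[symmetric] ki_def[symmetric] by (algebra | use rDi rki ex in algebra)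
  have "(\<Sum>j\<in>A. (1) * (P j / (L j - mu) * (P j * h1 - Q j * h0)) + (- w / D) * (P j / (L j - k) * (P j * f1 - Q j * f0)) + (- f0 / D) * (((f0 * Q j - f1 * P j) / (k - L j)) * ((P j * h1 - Q j * h0) / (L j - mu))) + (f0 * w / D^2) * (((f0 * Q j - f1 * P j) / (k - L j)) ^ 2) + (-1) * ((P j - f0 * ((f0 * Q j - f1 * P j) / (k - L j)) / D) / (L j - mu) * ((P j - f0 * ((f0 * Q j - f1 * P j) / (k - L j)) / D) * (- ((f0)^2 * h0) / D - (f1 * w) / D + ((f0)^3 * w) / D^2 + h1) - (- ((f0)^2 * P j) / D - (f1 * ((f0 * Q j - f1 * P j) / (k - L j))) / D + ((f0)^3 * ((f0 * Q j - f1 * P j) / (k - L j))) / D^2 + Q j) * (h0 - f0 * w / D)))) = 0" using T by simp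
  moreover have "(1) * (\<Sum>j\<in>A. P j / (L j - mu) * (P j * h1 - Q j * h0)) + (- w / D) * (\<Sum>j\<in>A. P j / (L j - k) * (P j * f1 - Q j * f0)) + (- f0 / D) * (\<Sum>j\<in>A. ((f0 * Q j - f1 * P j) / (k - L j)) * ((P j * h1 - Q j * h0) / (L j - mu))) + (f0 * w / D^2) * (\<Sum>j\<in>A. ((f0 * Q j - f1 * P j) / (k - L j)) ^ 2) + (-1) * (\<Sum>j\<in>A. (P j - f0 * ((f0 * Q j - f1 * P j) / (k - L j)) / D) / (L j - mu) * ((P j - f0 * ((f0 * Q j - f1 * P j) / (k - L j)) / D) * (- ((f0)^2 * h0) / D - (f1 * w) / D + ((f0)^3 * w) / D^2 + h1) - (- ((f0)^2 * P j) / D - (f1 * ((f0 * Q j - f1 * P j) / (k - L j))) / D + ((f0)^3 * ((f0 * Q j - f1 * P j) / (k - L j))) / D^2 + Q j) * (h0 - f0 * w / D))) = (\<Sum>j\<in>A. (1) * (P j / (L j - mu) * (P j * h1 - Q j * h0)) + (- w / D) * (P j / (L j - k) * (P j * f1 - Q j * f0)) + (- f0 / D) * (((f0 * Q j - f1 * P j) / (k - L j)) * ((P j * h1 - Q j * h0) / (L j - mu))) + (f0 * w / D^2) * (((f0 * Q j - f1 * P j) / (k - L j)) ^ 2) + (-1) * ((P j - f0 * ((f0 * Q j - f1 * P j) / (k - L j)) / D) / (L j - mu) * ((P j - f0 * ((f0 * Q j - f1 * P j) / (k - L j)) / D) * (- ((f0)^2 * h0) / D - (f1 * w) / D + ((f0)^3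 * w) / D^2 + h1) - (- ((f0)^2 * P j) / D - (f1 * ((f0 * Q j - f1 * P j) / (k - L j))) / D + ((f0)^3 * ((f0 * Q j - f1 * P j) / (k - L j))) / D^2 + Q j) * (h0 - f0 * w / D))))" by (simp only: sum.distrib sum_distrib_left[symmetric])
  ultimately have lin: "(1) * (\<Sum>j\<in>A. P j / (L j - mu) * (P j * h1 - Q j * h0)) + (- w / D) * (\<Sum>j\<in>A. P j / (L j - k) * (P j * f1 - Q j * f0)) + (- f0 / D) * (\<Sum>j\<in>A. ((f0 * Q j - f1 * P j) / (k - L j)) * ((P j * h1 - Q j * h0) / (L j - mu))) + (f0 * w / D^2) * (\<Sum>j\<in>A. ((f0 * Q j - f1 * P j) / (k - L j)) ^ 2) + (-1) * (\<Sum>j\<in>A. (P j - f0 * ((f0 * Q j - f1 * P j) / (k - L j)) / D) / (L j - mu) * ((P j - f0 * ((f0 * Q j - f1 * P j) / (k - L j)) / D) * (- ((f0)^2 * h0) / D - (f1 * w) / D + ((f0)^3 * w) / D^2 + h1) - (- ((f0)^2 * P j) / D - (f1 * ((f0 * Q j - f1 * P j) / (k - L j))) / D + ((f0)^3 * ((f0 * Q j - f1 * P j) / (k - L j))) / D^2 + Q j) * (h0 - f0 * w / D))) = 0" by simp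
  show ?thesis using C lin rDi rki ex unfolding divide_inverse power_inverse[symmetric] Di_def[symmetric] ki_def[symmetric] by algebra
qed

lemma kdv_alg:
  fixes u0 u1 u2 u3 k mu f0 f1 g0 g1 h0 h1 D w s :: real and P Q L :: "nat \<Rightarrow> real" and A :: "nat set"
  assumes LA: "\<forall>j\<in>A. L j \<noteq> k" and nz: "D \<noteq> 0" and ex: "True"
  shows "(- (6 * u0 * u1 + u3 + 4 * (\<Sum>j\<in>A. P j * Q j))) + 4 * ((u1 * f0 + (4 * k - 2 * u0) * f1 + (\<Sum>j\<in>A. P j / (L j - k) * (P j * f1 - Q j * f0))) * f1 + f0 * (u2 * f0 - u1 * f1 - (4 * k - 2 * u0) * (k + u0) * f0 + (\<Sum>j\<in>A. Q j / (L j - k) * (P j * f1 - Q j * f0) + P j ^ 2 * f0))) / D - 4 * f0 * f1 * (s^2 + 4 * f1^2 + (8 * k + 2 * u0) * f0^2 + (\<Sum>j\<in>A. ((f0 * Q j - f1 * P j) / (k - L j)) ^ 2)) / D^2 - 8 * f0^3 * (u1 * f0 + (4 * k - 2 * u0) * f1 + (\<Sum>j\<in>A. P j / (L j - k) * (P j * f1 - Q j * f0))) / D^2 + 4 * f0^4 * (s^2 + 4 * f1^2 + (8 * k + 2 * u0) * f0^2 + (\<Sum>j\<in>A. ((f0 * Q j - f1 * P j) / (k - L j)) ^ 2)) / D^3 + 6 * (u0 + 4 * f0 * f1 / D - 2 * f0^4 / D^2) * (- (4 * (f0)^2 * k) / D - (4 * (f0)^2 * u0) / D + (4 * (f1)^2)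 / D - (12 * (f0)^3 * f1) / D^2 + (4 * (f0)^6) / D^3 + u1) + (- (24 * f0 * f1 * u1) / D + (32 * (f0)^2 * k * u0) / D + (16 * (f0)^2 * (k)^2) / D + (16 * (f0)^2 * (u0)^2) / D - (4 * (f0)^2 * u2) / D - (16 * (f1)^2 * k) / D - (16 * (f1)^2 * u0) / D - (80 * f0 * (f1)^3) / D^2 + (160 * (f0)^3 * f1 * k) / D^2 + (160 * (f0)^3 * f1 * u0) / D^2 + (20 * (f0)^4 * u1) / D^2 + (320 * (f0)^4 * (f1)^2) / D^3 - (80 * (f0)^6 * k) / D^3 - (80 * (f0)^6 * u0) / D^3 - (240 * (f0)^7 * f1) / D^4 + (48 * (f0)^10) / D^5 + u3) + 4 * ((\<Sum>j\<in>A. (P j - f0 * ((f0 * Q j - f1 * P j) / (k - L j)) / D) * (- ((f0)^2 * P j) / D - (f1 * ((f0 * Q j - f1 * P j) / (k - L j))) / D + ((f0)^3 * ((f0 * Q j - f1 * P j) / (k - L j))) / D^2 + Q j)) + (s * f0 / D) * ((f1 * s) / D - ((f0)^3 * s) / D^2)) = 0"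
proof -
  define Di where "Di = inverse (D)"
  have rDi: "(D) * Di = 1" using nz unfolding Di_def by simp
  have T: "\<forall>j\<in>A. (-4) * (P j * Q j) + (4 * f1 / D - 8 * f0^3 / D^2) * (P j / (L j - k) * (P j * f1 - Q j * f0)) + (4 * f0 / D) * (Q j / (L j - k) * (P j * f1 - Q j * f0) + P j ^ 2 * f0) + (- 4 * f0 * f1 / D^2 + 4 * f0^4 / D^3) * (((f0 * Q j - f1 * P j) / (k - L j)) ^ 2) + (4) * ((P j - f0 * ((f0 * Q j - f1 * P j) / (k - L j)) / D) * (- ((f0)^2 * P j) / D - (f1 * ((f0 * Q j - f1 * P j) / (k - L j))) / D + ((f0)^3 * ((f0 * Q j - f1 * P j) / (k - L j))) / D^2 + Q j)) = 0"
  proof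
    fix j assume "j \<in> A"
    then have jnz: "L j - k \<noteq> 0" "k - L j \<noteq> 0" using LA by auto
    define ja where "ja = inverse (L j - k)"
    have rja: "(L j - k) * ja = 1" using jnz unfolding ja_def by simp
    define jb where "jb = inverse (k - L j)"
    have rjb: "(k - L j) * jb = 1" using jnz unfolding jb_def by simp
    show "(-4) * (P j * Q j) + (4 * f1 / D - 8 * f0^3 / D^2) * (P j / (L j - k) * (P j * f1 - Q j * f0)) + (4 * f0 / D) * (Q j / (L j - k) * (P j * f1 - Q j * f0) + P j ^ 2 * f0) + (- 4 * f0 * f1 / D^2 + 4 * f0^4 / D^3) * (((f0 * Q j - f1 * P j) / (k - L j)) ^ 2) + (4) * ((P j - f0 * ((f0 * Q j - f1 * P j) / (k - L j)) / D) * (- ((f0)^2 * P j) / D - (f1 * ((f0 * Q j - f1 * P j) / (k - L j))) / D + ((f0)^3 * ((f0 * Q j - f1 * P j) / (k - L j))) / D^2 + Q j)) = 0" unfolding divide_inverse power_inverse[symmetric] Di_def[symmetric] ja_def[symmetric] jb_def[symmetric] by (algebra | use rDi rja rjb ex in algebra)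
  qed
  have C: "(- (6 * u0 * u1 + u3 + 4 * 0)) + 4 * ((u1 * f0 + (4 * k - 2 * u0) * f1 + 0) * f1 + f0 * (u2 * f0 - u1 * f1 - (4 * k - 2 * u0) * (k + u0) * f0 + 0)) / D - 4 * f0 * f1 * (s^2 + 4 * f1^2 + (8 * k + 2 * u0) * f0^2 + 0) / D^2 - 8 * f0^3 * (u1 * f0 + (4 * k - 2 * u0) * f1 + 0) / D^2 + 4 * f0^4 * (s^2 + 4 * f1^2 + (8 * k + 2 * u0) * f0^2 + 0) / D^3 + 6 * (u0 + 4 * f0 * f1 / D - 2 * f0^4 / D^2) * (- (4 * (f0)^2 * k) / D - (4 * (f0)^2 * u0) / D + (4 * (f1)^2) / D - (12 * (f0)^3 * f1) / D^2 + (4 * (f0)^6) / D^3 + u1) + (- (24 * f0 * f1 * u1) / D + (32 * (f0)^2 * k * u0) / D + (16 * (f0)^2 * (k)^2) / D + (16 * (f0)^2 * (u0)^2) / D - (4 * (f0)^2 * u2) / D - (16 * (f1)^2 * k) / D - (16 * (f1)^2 * u0) / D - (80 * f0 * (f1)^3) / D^2 + (160 * (f0)^3 * f1 * k) / D^2 + (160 * (f0)^3 * f1 * u0) / D^2 + (20 * (f0)^4 * u1) / D^2 + (320 * (f0)^4 * (f1)^2) / D^3 - (80 * (f0)^6 * k) / D^3 - (80 * (f0)^6 * u0) / D^3 - (240 * (f0)^7 * f1) / D^4 + (48 * (f0)^10) / D^5 + u3) + 4 * (0 + (s * f0 / D) * ((f1 * s) / D - ((f0)^3 * s) / D^2)) =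 0" unfolding divide_inverse power_inverse[symmetric] Di_def[symmetric] by (algebra | use rDi ex in algebra)
  have "(\<Sum>j\<in>A. (-4) * (P j * Q j) + (4 * f1 / D - 8 * f0^3 / D^2) * (P j / (L j - k) * (P j * f1 - Q j * f0)) + (4 * f0 / D) * (Q j / (L j - k) * (P j * f1 - Q j * f0) + P j ^ 2 * f0) + (- 4 * f0 * f1 / D^2 + 4 * f0^4 / D^3) * (((f0 * Q j - f1 * P j) / (k - L j)) ^ 2) + (4) * ((P j - f0 * ((f0 * Q j - f1 * P j) / (k - L j)) / D) * (- ((f0)^2 * P j) / D - (f1 * ((f0 * Q j - f1 * P j) / (k - L j))) / D + ((f0)^3 * ((f0 * Q j - f1 * P j) / (k - L j))) / D^2 + Q j))) = 0" using T by simp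
  moreover have "(-4) * (\<Sum>j\<in>A. P j * Q j) + (4 * f1 / D - 8 * f0^3 / D^2) * (\<Sum>j\<in>A. P j / (L j - k) * (P j * f1 - Q j * f0)) + (4 * f0 / D) * (\<Sum>j\<in>A. Q j / (L j - k) * (P j * f1 - Q j * f0) + P j ^ 2 * f0) + (- 4 * f0 * f1 / D^2 + 4 * f0^4 / D^3) * (\<Sum>j\<in>A. ((f0 * Q j - f1 * P j) / (k - L j)) ^ 2) + (4) * (\<Sum>j\<in>A. (P j - f0 * ((f0 * Q j - f1 * P j) / (k - L j)) / D) * (- ((f0)^2 * P j) / D - (f1 * ((f0 * Q j - f1 * P j) / (k - L j))) / D + ((f0)^3 * ((f0 * Q j - f1 * P j) / (k - L j))) / D^2 + Q j)) = (\<Sum>j\<in>A. (-4) * (P j * Q j) + (4 * f1 / D - 8 * f0^3 / D^2) * (P j / (L j - k) * (P j * f1 - Q j * f0)) + (4 * f0 / D) * (Q j / (L j - k) * (P j * f1 - Q j * f0) + P j ^ 2 * f0) + (- 4 * f0 * f1 / D^2 + 4 * f0^4 / D^3) * (((f0 * Q j - f1 * P j) / (k - L j)) ^ 2) + (4) * ((P j - f0 * ((f0 * Q j - f1 * P j) / (k - L j)) / D) * (- ((f0)^2 * P j) / D - (f1 * ((f0 * Q j - f1 * P j) / (k - L j))) / D + ((f0)^3 * ((f0 * Q j - f1 * P j) / (k - L j))) / D^2 + Q j)))" by (simp only: sum.distrib sum_distrib_left[symmetric])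
  ultimately have lin: "(-4) * (\<Sum>j\<in>A. P j * Q j) + (4 * f1 / D - 8 * f0^3 / D^2) * (\<Sum>j\<in>A. P j / (L j - k) * (P j * f1 - Q j * f0)) + (4 * f0 / D) * (\<Sum>j\<in>A. Q j / (L j - k) * (P j * f1 - Q j * f0) + P j ^ 2 * f0) + (- 4 * f0 * f1 / D^2 + 4 * f0^4 / D^3) * (\<Sum>j\<in>A. ((f0 * Q j - f1 * P j) / (k - L j)) ^ 2) + (4) * (\<Sum>j\<in>A. (P j - f0 * ((f0 * Q j - f1 * P j) / (k - L j)) / D) * (- ((f0)^2 * P j) / D - (f1 * ((f0 * Q j - f1 * P j) / (k - L j))) / D + ((f0)^3 * ((f0 * Q j - f1 * P j) / (k - L j))) / D^2 + Q j)) = 0" by simp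
  show ?thesis using C lin rDi ex unfolding divide_inverse power_inverse[symmetric] Di_def[symmetric] by algebra
qed




lemma iter2_append: "iter2 (ws @ vs) h = iter2 ws (iter2 vs h)"
  by (induction ws) auto

lemma smooth2_iter: assumes "smooth2 h" shows "smooth2 (iter2 vs h)"
  unfolding smooth2_def
proof
  fix ws
  have "iter2 ws (iter2 vs h) = iter2 (ws @ vs) h" by (simp add: iter2_append)
  then show "(\<lambda>p. iter2 ws (iter2 vs h) (fst p) (snd p)) differentiable_on UNIV"
    using assms unfolding smooth2_def by metis
qed

lemma smooth2_px: "smooth2 h \<Longrightarrow> smooth2 (px h)"
  using smooth2_iter[of h "[True]"] by simp

lemma smooth2_pt: "smooth2 h \<Longrightarrow> smooth2 (pt h)"
  using smooth2_iter[of h "[False]"] by simp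

lemma smooth2_diff_at: assumes "smooth2 h" shows "(\<lambda>p. h (fst p) (snd p)) differentiable (at p)"
proof -
  have "(\<lambda>p. iter2 [] h (fst p) (snd p)) differentiable_on UNIV" using assms unfolding smooth2_def by blast
  then show ?thesis by (cases p) (simp add: differentiable_on_def)
qed

lemma smooth2_cont: "smooth2 h \<Longrightarrow> isCont (\<lambda>p. h (fst p) (snd p)) p"
  using smooth2_diff_at differentiable_imp_continuous_within by blast

lemma smooth2_dx: assumes "smooth2 h" shows "((\<lambda>y. h y t) has_real_derivative px h x t) (at x)"
proof -
  have "((\<lambda>p. h (fst p) (snd p)) \<circ> (\<lambda>y. (y, t))) differentiable (at x)"
    by (rule differentiable_chain_at) (auto intro!: derivative_intros smooth2_diff_at assms)
  then have "(\<lambda>y. h y t) differentiable (at x)" by (simp add: o_def)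
  then show ?thesis unfolding px_def using DERIV_deriv_iff_real_differentiable by blast
qed

lemma smooth2_dt: assumes "smooth2 h" shows "((\<lambda>s. h x s) has_real_derivative pt h x t) (at t)"
proof -
  have "((\<lambda>p. h (fst p) (snd p)) \<circ> (\<lambda>s. (x, s))) differentiable (at t)"
    by (rule differentiable_chain_at) (auto intro!: derivative_intros smooth2_diff_at assms)
  then have "(\<lambda>s. h x s) differentiable (at t)" by (simp add: o_def)
  then show ?thesis unfolding pt_def using DERIV_deriv_iff_real_differentiable by blast
qed

lemma dist_pair_le: "dist (x::real, y::real) (a, b) \<le> \<bar>x - a\<bar> + \<bar>y - b\<bar>"
proof -
  have "dist (x, y) (a, b) = sqrt ((x - a)^2 + (y - b)^2)"
    by (simp add: dist_Pair_Pair dist_real_def)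
  also have "\<dots> \<le> sqrt ((\<bar>x - a\<bar> + \<bar>y - b\<bar>)^2)"
    by (rule real_sqrt_le_mono) (simp add: power2_eq_square algebra_simps)
  also have "\<dots> = \<bar>x - a\<bar> + \<bar>y - b\<bar>" by simp
  finally show ?thesis .
qed

lemma schwarz:
  fixes g g1 g2 g12 g21 :: "real \<Rightarrow> real \<Rightarrow> real"
  assumes S: "open S" "(a, b) \<in> S"
  and d1: "\<And>x y. (x, y) \<in> S \<Longrightarrow> ((\<lambda>x. g x y) has_real_derivative g1 x y) (at x)"
  and d2: "\<And>x y. (x, y) \<in> S \<Longrightarrow> ((\<lambda>y. g x y) has_real_derivative g2 x y) (at y)"
  and d12: "\<And>x y. (x, y) \<in> S \<Longrightarrow> ((\<lambda>y. g1 x y) has_real_derivative g12 x y) (at y)"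
  and d21: "\<And>x y. (x, y) \<in> S \<Longrightarrow> ((\<lambda>x. g2 x y) has_real_derivative g21 x y) (at x)"
  and c12: "isCont (\<lambda>p. g12 (fst p) (snd p)) (a, b)"
  and c21: "isCont (\<lambda>p. g21 (fst p) (snd p)) (a, b)"
  shows "g12 a b = g21 a b"
proof (rule ccontr)
  assume ne: "g12 a b \<noteq> g21 a b"
  define \<epsilon> where "\<epsilon> = \<bar>g12 a b - g21 a b\<bar> / 2"
  have ep: "\<epsilon> > 0" using ne unfolding \<epsilon>_def by simp
  obtain r1 where r1: "r1 > 0" "\<And>p. dist p (a, b) < r1 \<Longrightarrow> dist (g12 (fst p) (snd p)) (g12 a b) < \<epsilon>"
    using c12 ep unfolding continuous_at_eps_delta by force
  obtain r2 where r2: "r2 > 0" "\<And>p. dist p (a, b) < r2 \<Longrightarrow> dist (g21 (fst p) (snd p)) (g21 a b) < \<epsilon>"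
    using c21 ep unfolding continuous_at_eps_delta by force
  obtain r3 where r3: "r3 > 0" "ball (a, b) r3 \<subseteq> S"
    using S open_contains_ball by blast
  define h where "h = min r1 (min r2 r3) / 3"
  have h0: "h > 0" using r1 r2 r3 unfolding h_def by simp
  have inr: "dist (x, y) (a, b) < r1 \<and> dist (x, y) (a, b) < r2 \<and> (x, y) \<in> S"
    if "a \<le> x" "x \<le> a + h" "b \<le> y" "y \<le> b + h" for x y
  proof -
    have "dist (x, y) (a, b) \<le> \<bar>x - a\<bar> + \<bar>y - b\<bar>" by (rule dist_pair_le)
    also have "\<dots> \<le> 2 * h" using that by simp
    finally have dd: "dist (x, y) (a, b) \<le> 2 * h" .
    have "2 * h < min r1 (min r2 r3)" using h0 unfolding h_def by linarith
    then have "dist (x, y) (a, b) < r1" "dist (x, y) (a, b) < r2" "dist (x, y) (a, b) < r3"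
      using dd by linarith+
    then show ?thesis using r3(2) by (auto simp: dist_commute)
  qed
  have ah: "a < a + h" "b < b + h" using h0 by simp_all
  have "\<exists>z. a < z \<and> z < a + h \<and> (g (a + h) (b + h) - g (a + h) b) - (g a (b + h) - g a b) = h * (g1 z (b + h) - g1 z b)"
  proof -
    have "\<exists>z. a < z \<and> z < a + h \<and> (\<lambda>x. g x (b + h) - g x b) (a + h) - (\<lambda>x. g x (b + h) - g x b) a = (a + h - a) * (g1 z (b + h) - g1 z b)"
    proof (rule MVT2[OF ah(1)])
      fix x assume "a \<le> x" "x \<le> a + h"
      then have "(x, b + h) \<in> S" "(x, b) \<in> S" using inr[of x "b + h"] inr[of x b] h0 by auto
      then show "((\<lambda>x. g x (b + h) - g x b) has_real_derivative g1 x (b + h) - g1 x b) (at x)"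
        by (intro derivative_intros d1)
    qed
    then show ?thesis by simp
  qed
  then obtain \<xi> where \<xi>: "a < \<xi>" "\<xi> < a + h"
    "(g (a + h) (b + h) - g (a + h) b) - (g a (b + h) - g a b) = h * (g1 \<xi> (b + h) - g1 \<xi> b)" by blast
  have "\<exists>z. b < z \<and> z < b + h \<and> g1 \<xi> (b + h) - g1 \<xi> b = (b + h - b) * g12 \<xi> z"
  proof (rule MVT2[OF ah(2)])
    fix y assume "b \<le> y" "y \<le> b + h"
    then have "(\<xi>, y) \<in> S" using inr[of \<xi> y] \<xi> by auto
    then show "((\<lambda>y. g1 \<xi> y) has_real_derivative g12 \<xi> y) (at y)" by (rule d12)
  qed
  then obtain \<eta> where \<eta>: "b < \<eta>" "\<eta> < b + h" "g1 \<xi> (b + h) - g1 \<xi> b = h * g12 \<xi> \<eta>" by auto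
  have "\<exists>z. b < z \<and> z < b + h \<and> (\<lambda>y. g (a + h) y - g a y) (b + h) - (\<lambda>y. g (a + h) y - g a y) b = (b + h - b) * (g2 (a + h) z - g2 a z)"
  proof (rule MVT2[OF ah(2)])
    fix y assume "b \<le> y" "y \<le> b + h"
    then have "(a + h, y) \<in> S" "(a, y) \<in> S" using inr[of "a + h" y] inr[of a y] h0 by auto
    then show "((\<lambda>y. g (a + h) y - g a y) has_real_derivative g2 (a + h) y - g2 a y) (at y)"
      by (intro derivative_intros d2)
  qed
  then obtain \<eta>' where \<eta>': "b < \<eta>'" "\<eta>' < b + h"
    "(g (a + h) (b + h) - g a (b + h)) - (g (a + h) b - g a b) = h * (g2 (a + h) \<eta>' - g2 a \<eta>')" by auto
  have "\<exists>z. a < z \<and> z < a + h \<and> g2 (a + h) \<eta>' - g2 a \<eta>' = (a + h - a) * g21 z \<eta>'"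
  proof (rule MVT2[OF ah(1)])
    fix x assume "a \<le> x" "x \<le> a + h"
    then have "(x, \<eta>') \<in> S" using inr[of x \<eta>'] \<eta>' by auto
    then show "((\<lambda>x. g2 x \<eta>') has_real_derivative g21 x \<eta>') (at x)" by (rule d21)
  qed
  then obtain \<xi>' where \<xi>': "a < \<xi>'" "\<xi>' < a + h" "g2 (a + h) \<eta>' - g2 a \<eta>' = h * g21 \<xi>' \<eta>'" by auto
  have "h * (h * g12 \<xi> \<eta>) = h * (h * g21 \<xi>' \<eta>')"
    using \<xi>(3) \<eta>(3) \<eta>'(3) \<xi>'(3) by (simp add: algebra_simps)
  then have eq: "g12 \<xi> \<eta> = g21 \<xi>' \<eta>'" using h0 by simp
  have "dist (g12 \<xi> \<eta>) (g12 a b) < \<epsilon>" using r1(2)[of "(\<xi>, \<eta>)"] inr[of \<xi> \<eta>] \<xi> \<eta> by simp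
  moreover have "dist (g21 \<xi>' \<eta>') (g21 a b) < \<epsilon>" using r2(2)[of "(\<xi>', \<eta>')"] inr[of \<xi>' \<eta>'] \<xi>' \<eta>' by simp
  ultimately show False using eq unfolding \<epsilon>_def dist_real_def by (auto simp: abs_if split: if_splits)
qed


lemma smooth2_swap: assumes "smooth2 h" shows "pt (px h) x t = px (pt h) x t"
proof (rule schwarz[of UNIV x t h "px h" "pt h" "pt (px h)" "px (pt h)"])
  show "isCont (\<lambda>p. pt (px h) (fst p) (snd p)) (x, t)"
    by (intro smooth2_cont smooth2_pt smooth2_px assms)
  show "isCont (\<lambda>p. px (pt h) (fst p) (snd p)) (x, t)"
    by (intro smooth2_cont smooth2_pt smooth2_px assms)
qed (auto intro!: smooth2_dx smooth2_dt smooth2_pt smooth2_px assms)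

lemma iter3_append: "iter3 (ws @ vs) F = iter3 ws (iter3 vs F)"
  by (induction ws) auto

lemma smooth3_iter: assumes "smooth3_on S F" shows "smooth3_on S (iter3 vs F)"
  unfolding smooth3_on_def
proof
  fix ws
  have "iter3 ws (iter3 vs F) = iter3 (ws @ vs) F" by (simp add: iter3_append)
  then show "(\<lambda>p. iter3 ws (iter3 vs F) (fst p) (fst (snd p)) (snd (snd p))) differentiable_on (S \<times> UNIV \<times> UNIV)"
    using assms unfolding smooth3_on_def by metis
qed

lemma smooth3_pxi: "smooth3_on S F \<Longrightarrow> smooth3_on S (pxi3 F)"
  using smooth3_iter[of S F "[0]"] by simp
lemma smooth3_px: "smooth3_on S F \<Longrightarrow> smooth3_on S (px3 F)"
  using smooth3_iter[of S F "[1]"] by simp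
lemma smooth3_pt: "smooth3_on S F \<Longrightarrow> smooth3_on S (pt3 F)"
  using smooth3_iter[of S F "[2]"] by simp

lemma smooth3_diff_at:
  assumes "open S" "smooth3_on S F" "\<xi> \<in> S"
  shows "(\<lambda>p. F (fst p) (fst (snd p)) (snd (snd p))) differentiable (at (\<xi>, x, t))"
proof -
  have "(\<lambda>p. iter3 [] F (fst p) (fst (snd p)) (snd (snd p))) differentiable_on (S \<times> UNIV \<times> UNIV)"
    using assms unfolding smooth3_on_def by blast
  moreover have "open (S \<times> (UNIV::real set) \<times> (UNIV::real set))" using assms(1) by (intro open_Times) auto
  ultimately show ?thesis using assms(3) differentiable_on_eq_differentiable_at by fastforce
qed

lemma smooth3_cont:
  assumes "open S" "smooth3_on S F" "\<xi> \<in> S"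
  shows "isCont (\<lambda>p. F (fst p) (fst (snd p)) (snd (snd p))) (\<xi>, x, t)"
  using smooth3_diff_at[OF assms] differentiable_imp_continuous_within by blast

lemma smooth3_dxi:
  assumes "open S" "smooth3_on S F" "\<xi> \<in> S"
  shows "((\<lambda>\<eta>. F \<eta> x t) has_real_derivative pxi3 F \<xi> x t) (at \<xi>)"
proof -
  have "((\<lambda>p. F (fst p) (fst (snd p)) (snd (snd p))) \<circ> (\<lambda>\<eta>. (\<eta>, x, t))) differentiable (at \<xi>)"
    by (rule differentiable_chain_at) (auto intro!: derivative_intros smooth3_diff_at assms)
  then have "(\<lambda>\<eta>. F \<eta> x t) differentiable (at \<xi>)" by (simp add: o_def)
  then show ?thesis unfolding pxi3_def using DERIV_deriv_iff_real_differentiable by blast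
qed

lemma smooth3_dx:
  assumes "open S" "smooth3_on S F" "\<xi> \<in> S"
  shows "((\<lambda>y. F \<xi> y t) has_real_derivative px3 F \<xi> x t) (at x)"
proof -
  have "((\<lambda>p. F (fst p) (fst (snd p)) (snd (snd p))) \<circ> (\<lambda>y. (\<xi>, y, t))) differentiable (at x)"
    by (rule differentiable_chain_at) (auto intro!: derivative_intros smooth3_diff_at assms)
  then have "(\<lambda>y. F \<xi> y t) differentiable (at x)" by (simp add: o_def)
  then show ?thesis unfolding px3_def using DERIV_deriv_iff_real_differentiable by blast
qed

lemma smooth3_dt:
  assumes "open S" "smooth3_on S F" "\<xi> \<in> S"
  shows "((\<lambda>s. F \<xi> x s) has_real_derivative pt3 F \<xi> x t) (at t)"
proof -
  have "((\<lambda>p. F (fst p) (fst (snd p)) (snd (snd p))) \<circ> (\<lambda>s. (\<xi>, x, s))) differentiable (at t)"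
    by (rule differentiable_chain_at) (auto intro!: derivative_intros smooth3_diff_at assms)
  then have "(\<lambda>s. F \<xi> x s) differentiable (at t)" by (simp add: o_def)
  then show ?thesis unfolding pt3_def using DERIV_deriv_iff_real_differentiable by blast
qed

lemma smooth3_cont2x:
  assumes "open S" "smooth3_on S F" "\<xi> \<in> S"
  shows "isCont (\<lambda>p. F (fst p) (snd p) t) (\<xi>, x)"
proof -
  have "isCont ((\<lambda>p. F (fst p) (fst (snd p)) (snd (snd p))) \<circ> (\<lambda>p. (fst p, snd p, t))) (\<xi>, x)"
    by (rule continuous_at_compose) (auto intro!: continuous_intros smooth3_cont[OF assms])
  then show ?thesis by (simp add: o_def)
qed

lemma smooth3_cont2t:
  assumes "open S" "smooth3_on S F" "\<xi> \<in> S"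
  shows "isCont (\<lambda>p. F (fst p) x (snd p)) (\<xi>, t)"
proof -
  have "isCont ((\<lambda>p. F (fst p) (fst (snd p)) (snd (snd p))) \<circ> (\<lambda>p. (fst p, x, snd p))) (\<xi>, t)"
    by (rule continuous_at_compose) (auto intro!: continuous_intros smooth3_cont[OF assms])
  then show ?thesis by (simp add: o_def)
qed

lemma smooth3_swap_x:
  assumes S: "open S" "smooth3_on S F" "\<xi> \<in> S"
  shows "pxi3 (px3 F) \<xi> x t = px3 (pxi3 F) \<xi> x t"
proof -
  have oS: "open (S \<times> (UNIV::real set))" using S(1) by (intro open_Times) auto
  have "(\<lambda>a b. px3 (pxi3 F) a b t) \<xi> x = (\<lambda>a b. pxi3 (px3 F) a b t) \<xi> x"
  proof (rule schwarz[OF oS, of \<xi> x "\<lambda>a b. F a b t" "\<lambda>a b. pxi3 F a b t" "\<lambda>a b. px3 F a b t"])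
    show "isCont (\<lambda>p. px3 (pxi3 F) (fst p) (snd p) t) (\<xi>, x)"
      by (rule smooth3_cont2x[OF S(1) smooth3_px[OF smooth3_pxi[OF S(2)]] S(3)])
    show "isCont (\<lambda>p. pxi3 (px3 F) (fst p) (snd p) t) (\<xi>, x)"
      by (rule smooth3_cont2x[OF S(1) smooth3_pxi[OF smooth3_px[OF S(2)]] S(3)])
  qed (use S in \<open>auto intro!: smooth3_dx smooth3_dxi smooth3_pxi smooth3_px\<close>)
  then show ?thesis by simp
qed

lemma smooth3_swap_t:
  assumes S: "open S" "smooth3_on S F" "\<xi> \<in> S"
  shows "pxi3 (pt3 F) \<xi> x t = pt3 (pxi3 F) \<xi> x t"
proof -
  have oS: "open (S \<times> (UNIV::real set))" using S(1) by (intro open_Times) auto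
  have "(\<lambda>a b. pt3 (pxi3 F) a x b) \<xi> t = (\<lambda>a b. pxi3 (pt3 F) a x b) \<xi> t"
  proof (rule schwarz[OF oS, of \<xi> t "\<lambda>a b. F a x b" "\<lambda>a b. pxi3 F a x b" "\<lambda>a b. pt3 F a x b"])
    show "isCont (\<lambda>p. pt3 (pxi3 F) (fst p) x (snd p)) (\<xi>, t)"
      by (rule smooth3_cont2t[OF S(1) smooth3_pt[OF smooth3_pxi[OF S(2)]] S(3)])
    show "isCont (\<lambda>p. pxi3 (pt3 F) (fst p) x (snd p)) (\<xi>, t)"
      by (rule smooth3_cont2t[OF S(1) smooth3_pxi[OF smooth3_pt[OF S(2)]] S(3)])
  qed (use S in \<open>auto intro!: smooth3_dt smooth3_dxi smooth3_pxi smooth3_pt\<close>)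
  then show ?thesis by simp
qed





lemma px_DERIV: "((\<lambda>y. a y t) has_real_derivative D') (at x) \<Longrightarrow> px a x t = D'"
  unfolding px_def by (rule DERIV_imp_deriv)
lemma pt_DERIV: "((\<lambda>s. a x s) has_real_derivative D') (at t) \<Longrightarrow> pt a x t = D'"
  unfolding pt_def by (rule DERIV_imp_deriv)

lemma deriv_frac_helper:
  assumes dX: "(X has_real_derivative X') (at k)" and dF: "(G has_real_derivative G') (at k)" and ne: "L \<noteq> k"
  shows "((\<lambda>\<xi>. P / (L - \<xi>) * (P * X \<xi> - Q * G \<xi>)) has_real_derivative P / (L - k) * (P * X' - Q * G') + P / (L - k)^2 * (P * X k - Q * G k)) (at k)"
proof -
  define d where "d = L - k"
  have d: "d \<noteq> 0" using ne d_def by simp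
  show ?thesis
    apply (auto intro!: derivative_eq_intros dX dF)
    unfolding d_def[symmetric] using d ne by (simp_all add: field_simps power2_eq_square)
qed

locale kdvset =
  fixes n :: nat and lam :: "nat \<Rightarrow> real" and u :: fn2 and Phi :: "nat \<Rightarrow> fn2"
    and F :: fn3 and e s :: "real \<Rightarrow> real"
  assumes distinct: "inj_on lam {1..Suc n}"
    and u_smooth: "smooth2 u"
    and Phi_smooth: "\<forall>j \<in> {1..n}. smooth2 (Phi j)"
    and kdvs: "kdvs_on UNIV n lam u Phi"
    and family: "\<exists>\<delta>>0. smooth3_on (ball (lam (Suc n)) \<delta>) F \<and>
        (\<forall>\<xi> \<in> ball (lam (Suc n)) \<delta>. \<xi> \<notin> lam ` {1..n} \<longrightarrow>
            smooth2 (F \<xi>) \<and> lax_sys_on UNIV n lam u Phi \<xi> (F \<xi>))"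
    and e_diff: "\<forall>t. e differentiable at t"
    and s_sqrt: "\<forall>t. (s t)\<^sup>2 = deriv e t"
begin

abbreviation "k \<equiv> lam (Suc n)"
abbreviation "f \<equiv> F k"
abbreviation "g \<equiv> pxi3 F k"

lemma lam_ne: assumes "j \<in> {1..n}" shows "lam j \<noteq> k"
proof
  assume "lam j = k"
  then have "j = Suc n" using inj_onD[OF distinct] assms by auto
  then show False using assms by simp
qed

lemma k_notin: "k \<notin> lam ` {1..n}"
proof
  assume "k \<in> lam ` {1..n}"
  then obtain j where "j \<in> {1..n}" "k = lam j" by blast
  then show False using lam_ne by metis
qed

lemma good_ball: "\<exists>\<delta>>0. smooth3_on (ball k \<delta>) F \<and>
   (\<forall>\<xi> \<in> ball k \<delta>. \<xi> \<notin> lam ` {1..n} \<and> smooth2 (F \<xi>) \<and> lax_sys_on UNIV n lam u Phi \<xi> (F \<xi>))"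
proof -
  obtain \<delta> where d: "\<delta> > 0" "smooth3_on (ball k \<delta>) F"
    "\<forall>\<xi> \<in> ball k \<delta>. \<xi> \<notin> lam ` {1..n} \<longrightarrow> smooth2 (F \<xi>) \<and> lax_sys_on UNIV n lam u Phi \<xi> (F \<xi>)"
    using family by blast
  obtain d where d2: "d > 0" "\<forall>x\<in>lam ` {1..n}. x \<noteq> k \<longrightarrow> d \<le> dist k x"
    using finite_set_avoid[of "lam ` {1..n}" k] by auto
  define r where "r = min \<delta> d"
  have r: "r > 0" "ball k r \<subseteq> ball k \<delta>" using d d2 unfolding r_def by auto
  have "smooth3_on (ball k r) F"
    using d(2) r(2) unfolding smooth3_on_def
    by (meson differentiable_on_subset order_refl Sigma_mono)
  moreover have "\<xi> \<notin> lam ` {1..n}" if "\<xi> \<in> ball k r" for \<xi>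
  proof
    assume a: "\<xi> \<in> lam ` {1..n}"
    then have "\<xi> \<noteq> k" using k_notin by metis
    then have "d \<le> dist k \<xi>" using d2 a by auto
    moreover have "dist k \<xi> < r" using that by simp
    ultimately show False unfolding r_def by simp
  qed
  ultimately show ?thesis using r d by blast
qed

definition "\<delta>0 = (SOME \<delta>. \<delta> > 0 \<and> smooth3_on (ball k \<delta>) F \<and>
   (\<forall>\<xi> \<in> ball k \<delta>. \<xi> \<notin> lam ` {1..n} \<and> smooth2 (F \<xi>) \<and> lax_sys_on UNIV n lam u Phi \<xi> (F \<xi>)))"

abbreviation "B \<equiv> ball k \<delta>0"

lemma B_props: "\<delta>0 > 0" "smooth3_on B F"
   "\<And>\<xi>. \<xi> \<in> B \<Longrightarrow> \<xi> \<notin> lam ` {1..n} \<and> smooth2 (F \<xi>) \<and> lax_sys_on UNIV n lam u Phi \<xi> (F \<xi>)"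
  using someI_ex[OF good_ball] unfolding \<delta>0_def[symmetric] by blast+

lemma kB: "k \<in> B" using B_props(1) by simp
lemma oB: "open B" by simp

lemma f_smooth: "smooth2 f" using B_props(3)[OF kB] by blast
lemma f_lax: "lax_sys_on UNIV n lam u Phi k f" using B_props(3)[OF kB] by blast

lemma px_F: "px (F \<xi>) = (\<lambda>x t. px3 F \<xi> x t)" unfolding px_def px3_def by simp
lemma pt_F: "pt (F \<xi>) = (\<lambda>x t. pt3 F \<xi> x t)" unfolding pt_def pt3_def by simp
lemma px_G: "px (\<lambda>x t. G \<xi> x t) = (\<lambda>x t. px3 G \<xi> x t)" unfolding px_def px3_def by simp
lemma pt_G: "pt (\<lambda>x t. G \<xi> x t) = (\<lambda>x t. pt3 G \<xi> x t)" unfolding pt_def pt3_def by simp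

lemma iter2_g: "iter2 ws g = (\<lambda>x t. iter3 (map (\<lambda>b. if b then 1 else 2) ws) (pxi3 F) k x t)"
proof (induction ws)
  case Nil then show ?case by simp
next
  case (Cons b ws)
  show ?case
  proof (cases b)
    case True then show ?thesis using Cons by (simp add: px_G[symmetric])
  next
    case False then show ?thesis using Cons by (simp add: pt_G[symmetric])
  qed
qed

lemma g_smooth: "smooth2 g"
  unfolding smooth2_def
proof
  fix ws
  define vs where "vs = map (\<lambda>b. if b then 1 else 2::nat) ws"
  have sm: "smooth3_on B (iter3 vs (pxi3 F))" by (intro smooth3_iter smooth3_pxi B_props)
  have "(\<lambda>p. iter3 vs (pxi3 F) k (fst p) (snd p)) differentiable (at p)" for p
  proof -
    have d: "(\<lambda>q. iter3 vs (pxi3 F) (fst q) (fst (snd q)) (snd (snd q))) differentiable (at (k, fst p, snd p))"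
      using smooth3_diff_at[OF oB sm kB] by blast
    have "((\<lambda>q. iter3 vs (pxi3 F) (fst q) (fst (snd q)) (snd (snd q))) \<circ> (\<lambda>p. (k, fst p, snd p))) differentiable (at p)"
      by (rule differentiable_chain_at) (use d in \<open>auto intro!: derivative_intros\<close>)
    then show ?thesis by (simp add: o_def)
  qed
  then show "(\<lambda>p. iter2 ws g (fst p) (snd p)) differentiable_on UNIV"
    unfolding iter2_g vs_def[symmetric] by (simp add: differentiable_at_imp_differentiable_on)
qed

lemma sB: "smooth3_on B F" by (rule B_props(2))

lemma deriv_zero_on_B:
  assumes "\<And>\<xi>. \<xi> \<in> B \<Longrightarrow> H \<xi> = 0" and "(H has_real_derivative D') (at k)"
  shows "D' = 0"
proof -
  have ev: "eventually (\<lambda>\<xi>. (\<lambda>_. 0) \<xi> = H \<xi>) (nhds k)"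
    using eventually_nhds_in_open[OF oB kB] by eventually_elim (use assms(1) in auto)
  have "((\<lambda>_. 0::real) has_real_derivative 0) (at k)" by simp
  then have "(H has_real_derivative 0) (at k)" using DERIV_cong_ev[OF refl ev refl] by blast
  then show ?thesis using DERIV_unique assms(2) by blast
qed

lemma pxpx_F: "px (px (F \<xi>)) = (\<lambda>x t. px3 (px3 F) \<xi> x t)" by (simp add: px_F px_G)

lemma swap_xx: "px3 (pxi3 (px3 F)) k x t = px3 (px3 (pxi3 F)) k x t"
proof -
  have "(\<lambda>y. pxi3 (px3 F) k y t) = (\<lambda>y. px3 (pxi3 F) k y t)"
    using smooth3_swap_x[OF oB sB kB] by auto
  then show ?thesis unfolding px3_def by simp
qed

lemma g_xx: "px (px g) x t = - f x t - (k + u x t) * g x t"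
proof -
  define H where "H \<xi> = px3 (px3 F) \<xi> x t + (\<xi> + u x t) * F \<xi> x t" for \<xi>
  have H0: "H \<xi> = 0" if "\<xi> \<in> B" for \<xi>
  proof -
    have "lax_sys_on UNIV n lam u Phi \<xi> (F \<xi>)" using B_props(3)[OF that] by blast
    then have "px (px (F \<xi>)) x t + (\<xi> + u x t) * F \<xi> x t = 0" unfolding lax_sys_on_def by blast
    then show ?thesis unfolding H_def pxpx_F by simp
  qed
  have dA: "((\<lambda>\<eta>. px3 (px3 F) \<eta> x t) has_real_derivative pxi3 (px3 (px3 F)) k x t) (at k)"
    by (rule smooth3_dxi[OF oB _ kB]) (intro smooth3_px sB)
  have dF: "((\<lambda>\<eta>. F \<eta> x t) has_real_derivative pxi3 F k x t) (at k)"
    by (rule smooth3_dxi[OF oB sB kB])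
  have "(H has_real_derivative (pxi3 (px3 (px3 F)) k x t + (F k x t + (k + u x t) * pxi3 F k x t))) (at k)"
    unfolding H_def by (auto intro!: derivative_eq_intros dA dF)
  then have z: "pxi3 (px3 (px3 F)) k x t + (F k x t + (k + u x t) * pxi3 F k x t) = 0"
    using deriv_zero_on_B H0 by blast
  have "pxi3 (px3 (px3 F)) k x t = px3 (pxi3 (px3 F)) k x t"
    by (rule smooth3_swap_x[OF oB _ kB]) (intro smooth3_px sB)
  also have "\<dots> = px3 (px3 (pxi3 F)) k x t" by (rule swap_xx)
  also have "\<dots> = px (px g) x t" unfolding px_def px3_def by simp
  finally show ?thesis using z by (simp add: algebra_simps)
qed

lemma g_t: "pt g x t = px u x t * g x t + (4 * k - 2 * u x t) * px g x t + 4 * px f x t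
   + (\<Sum>j\<in>{1..n}. Phi j x t / (lam j - k) * (Phi j x t * px g x t - px (Phi j) x t * g x t)
        + Phi j x t / (lam j - k)^2 * (Phi j x t * px f x t - px (Phi j) x t * f x t))"
proof -
  define Sfun where "Sfun \<xi> = (\<Sum>j\<in>{1..n}. Phi j x t / (lam j - \<xi>) * (Phi j x t * px3 F \<xi> x t - px (Phi j) x t * F \<xi> x t))" for \<xi>
  define H where "H \<xi> = pt3 F \<xi> x t - (px u x t * F \<xi> x t + (4 * \<xi> - 2 * u x t) * px3 F \<xi> x t
     + Sfun \<xi>)" for \<xi>
  have H0: "H \<xi> = 0" if "\<xi> \<in> B" for \<xi>
  proof -
    have "lax_sys_on UNIV n lam u Phi \<xi> (F \<xi>)" using B_props(3)[OF that] by blast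
    then have "pt (F \<xi>) x t = Aop n lam \<xi> u Phi (F \<xi>) x t" unfolding lax_sys_on_def by blast
    then show ?thesis unfolding H_def Sfun_def Aop_def Wr_def pt_F px_F by simp
  qed
  have dT: "((\<lambda>\<eta>. pt3 F \<eta> x t) has_real_derivative pxi3 (pt3 F) k x t) (at k)"
    by (rule smooth3_dxi[OF oB _ kB]) (intro smooth3_pt sB)
  have dX: "((\<lambda>\<eta>. px3 F \<eta> x t) has_real_derivative pxi3 (px3 F) k x t) (at k)"
    by (rule smooth3_dxi[OF oB _ kB]) (intro smooth3_px sB)
  have dF: "((\<lambda>\<eta>. F \<eta> x t) has_real_derivative pxi3 F k x t) (at k)"
    by (rule smooth3_dxi[OF oB sB kB])
  have dS: "(Sfun has_real_derivative (\<Sum>j\<in>{1..n}. Phi j x t / (lam j - k) * (Phi j x t * pxi3 (px3 F) k x t - px (Phi j) x t * pxi3 F k x t)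
        + Phi j x t / (lam j - k)^2 * (Phi j x t * px3 F k x t - px (Phi j) x t * F k x t))) (at k)"
    unfolding Sfun_def[abs_def]
  proof (rule DERIV_sum)
    fix j assume j: "j \<in> {1..n}"
    then have ne: "lam j - k \<noteq> 0" using lam_ne by auto
    show "((\<lambda>\<xi>. Phi j x t / (lam j - \<xi>) * (Phi j x t * px3 F \<xi> x t - px (Phi j) x t * F \<xi> x t))
     has_real_derivative Phi j x t / (lam j - k) * (Phi j x t * pxi3 (px3 F) k x t - px (Phi j) x t * pxi3 F k x t)
        + Phi j x t / (lam j - k)^2 * (Phi j x t * px3 F k x t - px (Phi j) x t * F k x t)) (at k)"
      by (rule deriv_frac_helper[OF dX dF]) (use ne in simp)
  qed
  have "(H has_real_derivative pxi3 (pt3 F) k x t - (px u x t * pxi3 F k x t + ((4 * px3 F k x t) + (4 * k - 2 * u x t) * pxi3 (px3 F) k x t)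
     + (\<Sum>j\<in>{1..n}. Phi j x t / (lam j - k) * (Phi j x t * pxi3 (px3 F) k x t - px (Phi j) x t * pxi3 F k x t)
        + Phi j x t / (lam j - k)^2 * (Phi j x t * px3 F k x t - px (Phi j) x t * F k x t)))) (at k)"
    unfolding H_def by (auto intro!: derivative_eq_intros dT dX dF dS)
  then have z: "pxi3 (pt3 F) k x t - (px u x t * pxi3 F k x t + ((4 * px3 F k x t) + (4 * k - 2 * u x t) * pxi3 (px3 F) k x t)
     + (\<Sum>j\<in>{1..n}. Phi j x t / (lam j - k) * (Phi j x t * pxi3 (px3 F) k x t - px (Phi j) x t * pxi3 F k x t)
        + Phi j x t / (lam j - k)^2 * (Phi j x t * px3 F k x t - px (Phi j) x t * F k x t))) = 0"
    using deriv_zero_on_B H0 by blast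
  have e1: "pxi3 (pt3 F) k x t = pt g x t"
    using smooth3_swap_t[OF oB sB kB] unfolding pt_def pt3_def by simp
  have e2: "pxi3 (px3 F) k x t = px g x t"
    using smooth3_swap_x[OF oB sB kB] unfolding px_def px3_def by simp
  have e3: "px3 F k x t = px f x t" unfolding px_def px3_def by simp
  have z': "pt g x t - (px u x t * g x t + ((4 * px f x t) + (4 * k - 2 * u x t) * px g x t)
     + (\<Sum>j\<in>{1..n}. Phi j x t / (lam j - k) * (Phi j x t * px g x t - px (Phi j) x t * g x t)
        + Phi j x t / (lam j - k)^2 * (Phi j x t * px f x t - px (Phi j) x t * f x t))) = 0"
    using z by (simp only: e1 e2 e3)
  then show ?thesis by linarith
qed

lemma Phi_sm: "j \<in> {1..n} \<Longrightarrow> smooth2 (Phi j)" using Phi_smooth by blast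
lemma Phi_xx: assumes j: "j \<in> {1..n}" shows "px (px (Phi j)) x t = - (lam j + u x t) * Phi j x t"
proof -
  have "px (px (Phi j)) x t + (lam j + u x t) * Phi j x t = 0" using kdvs j unfolding kdvs_on_def by blast
  then show ?thesis by algebra
qed
lemma u_t: "pt u x t = - (6 * u x t * px u x t + px (px (px u)) x t + 4 * (\<Sum>j\<in>{1..n}. Phi j x t * px (Phi j) x t))"
proof -
  have "pt u x t + 6 * u x t * px u x t + px (px (px u)) x t + 4 * (\<Sum>j\<in>{1..n}. Phi j x t * px (Phi j) x t) = 0"
    using kdvs unfolding kdvs_on_def by blast
  then show ?thesis by algebra
qed

definition "laxsol \<mu> h \<longleftrightarrow> smooth2 h \<and> \<mu> \<notin> lam ` {1..n} \<and> lax_sys_on UNIV n lam u Phi \<mu> h"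

lemma f_laxsol: "laxsol k f" unfolding laxsol_def using f_smooth f_lax k_notin by blast

lemma L1: assumes "laxsol \<mu> h" shows "px (px h) x t = - (\<mu> + u x t) * h x t"
proof -
  have "px (px h) x t + (\<mu> + u x t) * h x t = 0" using assms unfolding laxsol_def lax_sys_on_def by blast
  then show ?thesis by algebra
qed

lemma L2: "laxsol \<mu> h \<Longrightarrow> pt h x t = px u x t * h x t + (4 * \<mu> - 2 * u x t) * px h x t
    + (\<Sum>j\<in>{1..n}. Phi j x t / (lam j - \<mu>) * (Phi j x t * px h x t - px (Phi j) x t * h x t))"
  unfolding laxsol_def lax_sys_on_def Aop_def Wr_def by auto

lemma L3:
  assumes ls: "laxsol \<mu> h"
  shows "pt (px h) x t = px (px u) x t * h x t - px u x t * px h x t - (4 * \<mu> - 2 * u x t) * (\<mu> + u x t) * h x t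
    + (\<Sum>j\<in>{1..n}. px (Phi j) x t / (lam j - \<mu>) * (Phi j x t * px h x t - px (Phi j) x t * h x t) + Phi j x t ^ 2 * h x t)"
proof -
  have hs: "smooth2 h" and mu: "\<mu> \<notin> lam ` {1..n}" using ls unfolding laxsol_def by auto
  define Sfun where "Sfun y = (\<Sum>j\<in>{1..n}. Phi j y t / (lam j - \<mu>) * (Phi j y t * px h y t - px (Phi j) y t * h y t))" for y
  have pth: "pt h = (\<lambda>x t. px u x t * h x t + (4 * \<mu> - 2 * u x t) * px h x t
    + (\<Sum>j\<in>{1..n}. Phi j x t / (lam j - \<mu>) * (Phi j x t * px h x t - px (Phi j) x t * h x t)))"
    using L2[OF ls] by (intro ext) simp
  have dh: "((\<lambda>y. h y t) has_real_derivative px h x t) (at x)" by (rule smooth2_dx[OF hs])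
  have dh1: "((\<lambda>y. px h y t) has_real_derivative - (\<mu> + u x t) * h x t) (at x)"
    using smooth2_dx[OF smooth2_px[OF hs], of t x] L1[OF ls] by simp
  have du: "((\<lambda>y. u y t) has_real_derivative px u x t) (at x)" by (rule smooth2_dx[OF u_smooth])
  have du1: "((\<lambda>y. px u y t) has_real_derivative px (px u) x t) (at x)" by (rule smooth2_dx[OF smooth2_px[OF u_smooth]])
  have dS: "(Sfun has_real_derivative (\<Sum>j\<in>{1..n}. px (Phi j) x t / (lam j - \<mu>) * (Phi j x t * px h x t - px (Phi j) x t * h x t) + Phi j x t ^ 2 * h x t)) (at x)"
    unfolding Sfun_def[abs_def]
  proof (rule DERIV_sum)
    fix j assume j: "j \<in> {1..n}"
    have ne: "lam j \<noteq> \<mu>" using mu j by auto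
    have dP: "((\<lambda>y. Phi j y t) has_real_derivative px (Phi j) x t) (at x)" by (rule smooth2_dx[OF Phi_sm[OF j]])
    have dQ: "((\<lambda>y. px (Phi j) y t) has_real_derivative - (lam j + u x t) * Phi j x t) (at x)"
      using smooth2_dx[OF smooth2_px[OF Phi_sm[OF j]], of t x] Phi_xx[OF j] by simp
    define d where "d = lam j - \<mu>"
    have d: "d \<noteq> 0" using ne d_def by simp
    have dl: "lam j = d + \<mu>" using d_def by simp
    show "((\<lambda>y. Phi j y t / (lam j - \<mu>) * (Phi j y t * px h y t - px (Phi j) y t * h y t)) has_real_derivative
      px (Phi j) x t / (lam j - \<mu>) * (Phi j x t * px h x t - px (Phi j) x t * h x t) + Phi j x t ^ 2 * h x t) (at x)"
      apply (auto intro!: derivative_eq_intros dP dQ dh dh1)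
      unfolding d_def[symmetric] using d ne dl by (simp_all add: field_simps power2_eq_square numeral_eq_Suc)
  qed
  have "((\<lambda>y. px u y t * h y t + (4 * \<mu> - 2 * u y t) * px h y t + Sfun y) has_real_derivative
    px (px u) x t * h x t - px u x t * px h x t - (4 * \<mu> - 2 * u x t) * (\<mu> + u x t) * h x t
    + (\<Sum>j\<in>{1..n}. px (Phi j) x t / (lam j - \<mu>) * (Phi j x t * px h x t - px (Phi j) x t * h x t) + Phi j x t ^ 2 * h x t)) (at x)"
    by (auto intro!: derivative_eq_intros dh dh1 du du1 dS simp: algebra_simps)
  then have "px (pt h) x t = px (px u) x t * h x t - px u x t * px h x t - (4 * \<mu> - 2 * u x t) * (\<mu> + u x t) * h x t
    + (\<Sum>j\<in>{1..n}. px (Phi j) x t / (lam j - \<mu>) * (Phi j x t * px h x t - px (Phi j) x t * h x t) + Phi j x t ^ 2 * h x t)"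
    unfolding Sfun_def by (intro px_DERIV) (simp add: pth)
  then show ?thesis using smooth2_swap[OF hs] by simp
qed

lemma f_xx: "px (px f) x t = - (k + u x t) * f x t" by (rule L1[OF f_laxsol])

lemma gxt: "pt (px g) x t = px (px u) x t * g x t - px u x t * px g x t
   - (4 * k - 2 * u x t) * (f x t + (k + u x t) * g x t) - 4 * (k + u x t) * f x t
   + (\<Sum>j\<in>{1..n}. px (Phi j) x t / (lam j - k) * (Phi j x t * px g x t - px (Phi j) x t * g x t)
       + px (Phi j) x t / (lam j - k)^2 * (Phi j x t * px f x t - px (Phi j) x t * f x t) + Phi j x t ^ 2 * g x t)"
proof -
  define Sfun where "Sfun y = (\<Sum>j\<in>{1..n}. Phi j y t / (lam j - k) * (Phi j y t * px g y t - px (Phi j) y t * g y t)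
        + Phi j y t / (lam j - k)^2 * (Phi j y t * px f y t - px (Phi j) y t * f y t))" for y
  have ptg: "pt g = (\<lambda>x t. px u x t * g x t + (4 * k - 2 * u x t) * px g x t + 4 * px f x t
   + (\<Sum>j\<in>{1..n}. Phi j x t / (lam j - k) * (Phi j x t * px g x t - px (Phi j) x t * g x t)
        + Phi j x t / (lam j - k)^2 * (Phi j x t * px f x t - px (Phi j) x t * f x t)))"
    using g_t by (intro ext) simp
  have dg: "((\<lambda>y. g y t) has_real_derivative px g x t) (at x)" by (rule smooth2_dx[OF g_smooth])
  have dg1: "((\<lambda>y. px g y t) has_real_derivative - f x t - (k + u x t) * g x t) (at x)"
    using smooth2_dx[OF smooth2_px[OF g_smooth], of t x] g_xx by simp
  have df: "((\<lambda>y. f y t) has_real_derivative px f x t) (at x)" by (rule smooth2_dx[OF f_smooth])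
  have df1: "((\<lambda>y. px f y t) has_real_derivative - (k + u x t) * f x t) (at x)"
    using smooth2_dx[OF smooth2_px[OF f_smooth], of t x] f_xx by simp
  have du: "((\<lambda>y. u y t) has_real_derivative px u x t) (at x)" by (rule smooth2_dx[OF u_smooth])
  have du1: "((\<lambda>y. px u y t) has_real_derivative px (px u) x t) (at x)" by (rule smooth2_dx[OF smooth2_px[OF u_smooth]])
  have dS: "(Sfun has_real_derivative (\<Sum>j\<in>{1..n}. px (Phi j) x t / (lam j - k) * (Phi j x t * px g x t - px (Phi j) x t * g x t)
       + px (Phi j) x t / (lam j - k)^2 * (Phi j x t * px f x t - px (Phi j) x t * f x t) + Phi j x t ^ 2 * g x t)) (at x)"
    unfolding Sfun_def[abs_def]
  proof (rule DERIV_sum)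
    fix j assume j: "j \<in> {1..n}"
    have ne: "lam j \<noteq> k" using lam_ne j by auto
    have dP: "((\<lambda>y. Phi j y t) has_real_derivative px (Phi j) x t) (at x)" by (rule smooth2_dx[OF Phi_sm[OF j]])
    have dQ: "((\<lambda>y. px (Phi j) y t) has_real_derivative - (lam j + u x t) * Phi j x t) (at x)"
      using smooth2_dx[OF smooth2_px[OF Phi_sm[OF j]], of t x] Phi_xx[OF j] by simp
    define d where "d = lam j - k"
    have d: "d \<noteq> 0" using ne d_def by simp
    have dl: "lam j = d + k" using d_def by simp
    show "((\<lambda>y. Phi j y t / (lam j - k) * (Phi j y t * px g y t - px (Phi j) y t * g y t)
        + Phi j y t / (lam j - k)^2 * (Phi j y t * px f y t - px (Phi j) y t * f y t)) has_real_derivative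
      px (Phi j) x t / (lam j - k) * (Phi j x t * px g x t - px (Phi j) x t * g x t)
       + px (Phi j) x t / (lam j - k)^2 * (Phi j x t * px f x t - px (Phi j) x t * f x t) + Phi j x t ^ 2 * g x t) (at x)"
      apply (auto intro!: derivative_eq_intros dP dQ dg dg1 df df1)
      unfolding d_def[symmetric] using d ne dl by (simp_all add: field_simps power2_eq_square numeral_eq_Suc)
  qed
  have "((\<lambda>y. px u y t * g y t + (4 * k - 2 * u y t) * px g y t + 4 * px f y t + Sfun y) has_real_derivative
    px (px u) x t * g x t - px u x t * px g x t
   - (4 * k - 2 * u x t) * (f x t + (k + u x t) * g x t) - 4 * (k + u x t) * f x t
   + (\<Sum>j\<in>{1..n}. px (Phi j) x t / (lam j - k) * (Phi j x t * px g x t - px (Phi j) x t * g x t)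
       + px (Phi j) x t / (lam j - k)^2 * (Phi j x t * px f x t - px (Phi j) x t * f x t) + Phi j x t ^ 2 * g x t)) (at x)"
    by (auto intro!: derivative_eq_intros dg dg1 df df1 du du1 dS simp: algebra_simps)
  then have "px (pt g) x t = px (px u) x t * g x t - px u x t * px g x t
   - (4 * k - 2 * u x t) * (f x t + (k + u x t) * g x t) - 4 * (k + u x t) * f x t
   + (\<Sum>j\<in>{1..n}. px (Phi j) x t / (lam j - k) * (Phi j x t * px g x t - px (Phi j) x t * g x t)
       + px (Phi j) x t / (lam j - k)^2 * (Phi j x t * px f x t - px (Phi j) x t * f x t) + Phi j x t ^ 2 * g x t)"
    unfolding Sfun_def by (intro px_DERIV) (simp add: ptg)
  then show ?thesis using smooth2_swap[OF g_smooth] by simp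
qed

definition "wff = (\<lambda>x t. - Wr f g x t)"
definition "D = (\<lambda>x t. e t + wff x t)"

lemma wff_dx: "((\<lambda>y. wff y t) has_real_derivative (f x t)^2) (at x)"
proof -
  have dg: "((\<lambda>y. g y t) has_real_derivative px g x t) (at x)" by (rule smooth2_dx[OF g_smooth])
  have dg1: "((\<lambda>y. px g y t) has_real_derivative - f x t - (k + u x t) * g x t) (at x)"
    using smooth2_dx[OF smooth2_px[OF g_smooth], of t x] g_xx by simp
  have df: "((\<lambda>y. f y t) has_real_derivative px f x t) (at x)" by (rule smooth2_dx[OF f_smooth])
  have df1: "((\<lambda>y. px f y t) has_real_derivative - (k + u x t) * f x t) (at x)"
    using smooth2_dx[OF smooth2_px[OF f_smooth], of t x] f_xx by simp
  show ?thesis unfolding wff_def Wr_def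
    by (auto intro!: derivative_eq_intros dg dg1 df df1 simp: algebra_simps power2_eq_square)
qed

lemma wff_dt: "((\<lambda>s. wff x s) has_real_derivative 4 * (px f x t)^2 + (8 * k + 2 * u x t) * (f x t)^2
   + (\<Sum>j\<in>{1..n}. ((f x t * px (Phi j) x t - px f x t * Phi j x t) / (k - lam j))^2)) (at t)"
proof -
  have dg: "((\<lambda>s. g x s) has_real_derivative pt g x t) (at t)" by (rule smooth2_dt[OF g_smooth])
  have dg1: "((\<lambda>s. px g x s) has_real_derivative pt (px g) x t) (at t)" by (rule smooth2_dt[OF smooth2_px[OF g_smooth]])
  have df: "((\<lambda>s. f x s) has_real_derivative pt f x t) (at t)" by (rule smooth2_dt[OF f_smooth])
  have df1: "((\<lambda>s. px f x s) has_real_derivative pt (px f) x t) (at t)" by (rule smooth2_dt[OF smooth2_px[OF f_smooth]])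
  have "((\<lambda>s. wff x s) has_real_derivative - (pt f x t * px g x t + f x t * pt (px g) x t - pt (px f) x t * g x t - px f x t * pt g x t)) (at t)"
    unfolding wff_def Wr_def by (auto intro!: derivative_eq_intros dg dg1 df df1 simp: algebra_simps)
  moreover have "- (pt f x t * px g x t + f x t * pt (px g) x t - pt (px f) x t * g x t - px f x t * pt g x t)
     = 4 * (px f x t)^2 + (8 * k + 2 * u x t) * (f x t)^2
   + (\<Sum>j\<in>{1..n}. ((f x t * px (Phi j) x t - px f x t * Phi j x t) / (k - lam j))^2)"
    unfolding L2[OF f_laxsol] L3[OF f_laxsol] gxt g_t
    by (rule wff_alg[where A="{1..n}" and P="\<lambda>j. Phi j x t" and Q="\<lambda>j. px (Phi j) x t" and L=lam])
       (use lam_ne in auto)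
  ultimately show ?thesis by simp
qed

lemma D_dx: "((\<lambda>y. D y t) has_real_derivative (f x t)^2) (at x)"
  unfolding D_def using wff_dx by (auto intro!: derivative_eq_intros)

lemma e_dt: "(e has_real_derivative (s t)^2) (at t)"
  using e_diff s_sqrt DERIV_deriv_iff_real_differentiable by metis

lemma D_dt: "((\<lambda>s'. D x s') has_real_derivative (s t)^2 + 4 * (px f x t)^2 + (8 * k + 2 * u x t) * (f x t)^2
   + (\<Sum>j\<in>{1..n}. ((f x t * px (Phi j) x t - px f x t * Phi j x t) / (k - lam j))^2)) (at t)"
  unfolding D_def using wff_dt[of x t] e_dt[of t] by (auto intro!: derivative_eq_intros)



lemma O1:
  assumes hs: "smooth2 h" and hxx: "\<And>x t. px (px h) x t = - (\<mu> + u x t) * h x t"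
  shows "((\<lambda>y. Wr f h y t) has_real_derivative (k - \<mu>) * (f x t * h x t)) (at x)"
proof -
  have dh: "((\<lambda>y. h y t) has_real_derivative px h x t) (at x)" by (rule smooth2_dx[OF hs])
  have dh1: "((\<lambda>y. px h y t) has_real_derivative - (\<mu> + u x t) * h x t) (at x)"
    using smooth2_dx[OF smooth2_px[OF hs], of t x] hxx by simp
  have df: "((\<lambda>y. f y t) has_real_derivative px f x t) (at x)" by (rule smooth2_dx[OF f_smooth])
  have df1: "((\<lambda>y. px f y t) has_real_derivative - (k + u x t) * f x t) (at x)"
    using smooth2_dx[OF smooth2_px[OF f_smooth], of t x] f_xx by simp
  show ?thesis unfolding Wr_def
    by (auto intro!: derivative_eq_intros dh dh1 df df1 simp: algebra_simps)
qed

lemma O2: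
  assumes ls: "laxsol \<mu> h" and mk: "\<mu> \<noteq> k"
  shows "((\<lambda>s. Wr f h x s / (k - \<mu>)) has_real_derivative 4 * px f x t * px h x t + (4 * k + 4 * \<mu> + 2 * u x t) * f x t * h x t
     + (\<Sum>j\<in>{1..n}. ((f x t * px (Phi j) x t - px f x t * Phi j x t) / (k - lam j)) * ((Phi j x t * px h x t - px (Phi j) x t * h x t) / (lam j - \<mu>)))) (at t)"
proof -
  have hs: "smooth2 h" and mu: "\<mu> \<notin> lam ` {1..n}" using ls unfolding laxsol_def by auto
  have dh: "((\<lambda>s. h x s) has_real_derivative pt h x t) (at t)" by (rule smooth2_dt[OF hs])
  have dh1: "((\<lambda>s. px h x s) has_real_derivative pt (px h) x t) (at t)" by (rule smooth2_dt[OF smooth2_px[OF hs]])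
  have df: "((\<lambda>s. f x s) has_real_derivative pt f x t) (at t)" by (rule smooth2_dt[OF f_smooth])
  have df1: "((\<lambda>s. px f x s) has_real_derivative pt (px f) x t) (at t)" by (rule smooth2_dt[OF smooth2_px[OF f_smooth]])
  have "((\<lambda>s. Wr f h x s) has_real_derivative (pt f x t * px h x t + f x t * pt (px h) x t - pt (px f) x t * h x t - px f x t * pt h x t)) (at t)"
    unfolding Wr_def by (auto intro!: derivative_eq_intros dh dh1 df df1 simp: algebra_simps)
  then have "((\<lambda>s. Wr f h x s / (k - \<mu>)) has_real_derivative (pt f x t * px h x t + f x t * pt (px h) x t - pt (px f) x t * h x t - px f x t * pt h x t) / (k - \<mu>)) (at t)"
    by (rule DERIV_cdivide)
  moreover have "(pt f x t * px h x t + f x t * pt (px h) x t - pt (px f) x t * h x t - px f x t * pt h x t) / (k - \<mu>)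
     = 4 * px f x t * px h x t + (4 * k + 4 * \<mu> + 2 * u x t) * f x t * h x t
     + (\<Sum>j\<in>{1..n}. ((f x t * px (Phi j) x t - px f x t * Phi j x t) / (k - lam j)) * ((Phi j x t * px h x t - px (Phi j) x t * h x t) / (lam j - \<mu>)))"
    unfolding L2[OF f_laxsol] L3[OF f_laxsol] L2[OF ls] L3[OF ls]
    by (rule wt_alg[where A="{1..n}" and P="\<lambda>j. Phi j x t" and Q="\<lambda>j. px (Phi j) x t" and L=lam])
       (use lam_ne mu mk in auto)
  ultimately show ?thesis by simp
qed

lemma D_isCont_x: "isCont (\<lambda>y. D y t) x" using D_dx DERIV_isCont by blast
lemma D_isCont_t: "isCont (\<lambda>s. D x s) t" using D_dt DERIV_isCont by blast

lemma open_x: "open {y. D y t \<noteq> 0}"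
proof -
  have "continuous_on UNIV (\<lambda>y. D y t)" using D_isCont_x by (simp add: continuous_at_imp_continuous_on)
  then show ?thesis using open_Collect_neq[of "\<lambda>y. D y t" "\<lambda>_. 0"] by auto
qed
lemma open_t: "open {s. D x s \<noteq> 0}"
proof -
  have "continuous_on UNIV (\<lambda>s. D x s)" using D_isCont_t by (simp add: continuous_at_imp_continuous_on)
  then show ?thesis using open_Collect_neq[of "\<lambda>s. D x s" "\<lambda>_. 0"] by auto
qed

lemma px_cong:
  assumes "D x t \<noteq> 0" "\<And>y. D y t \<noteq> 0 \<Longrightarrow> a y t = b y t"
  shows "px a x t = px b x t"
proof -
  have "eventually (\<lambda>y. y \<in> {y. D y t \<noteq> 0}) (nhds x)" using eventually_nhds_in_open[OF open_x] assms(1) by auto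
  then have "eventually (\<lambda>y. a y t = b y t) (nhds x)" by eventually_elim (use assms(2) in auto)
  then show ?thesis unfolding px_def by (rule deriv_cong_ev) simp
qed

lemma pt_cong:
  assumes "D x t \<noteq> 0" "\<And>s. D x s \<noteq> 0 \<Longrightarrow> a x s = b x s"
  shows "pt a x t = pt b x t"
proof -
  have "eventually (\<lambda>s. s \<in> {s. D x s \<noteq> 0}) (nhds t)" using eventually_nhds_in_open[OF open_t] assms(1) by auto
  then have "eventually (\<lambda>s. a x s = b x s) (nhds t)" by eventually_elim (use assms(2) in auto)
  then show ?thesis unfolding pt_def by (rule deriv_cong_ev) simp
qed

definition "hb \<mu> h = (\<lambda>x t. h x t - f x t * (Wr f h x t / (k - \<mu>)) / D x t)"

lemma B1:
  assumes hs: "smooth2 h" and hxx: "\<And>x t. px (px h) x t = - (\<mu> + u x t) * h x t" and mk: "\<mu> \<noteq> k"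
    and Dn: "D x t \<noteq> 0"
  shows "((\<lambda>y. hb \<mu> h y t) has_real_derivative (- (((f x t))^2 * (h x t)) / (D x t) - ((px f x t) * (Wr f h x t / (k - \<mu>))) / (D x t) + (((f x t))^3 * (Wr f h x t / (k - \<mu>))) / (D x t)^2 + (px h x t))) (at x)"
proof -
  define d where "d = k - \<mu>"
  have d: "d \<noteq> 0" using mk d_def by simp
  have dh: "((\<lambda>y. h y t) has_real_derivative px h x t) (at x)" by (rule smooth2_dx[OF hs])
  have df: "((\<lambda>y. f y t) has_real_derivative px f x t) (at x)" by (rule smooth2_dx[OF f_smooth])
  have dw: "((\<lambda>y. Wr f h y t) has_real_derivative d * (f x t * h x t)) (at x)" using O1[OF hs hxx] unfolding d_def .
  show ?thesis unfolding hb_def d_def[symmetric]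
    by (auto intro!: derivative_eq_intros dh df dw D_dx simp: Dn d) (simp add: field_simps Dn d power2_eq_square numeral_eq_Suc)
qed

lemma B1': "smooth2 h \<Longrightarrow> (\<And>x t. px (px h) x t = - (\<mu> + u x t) * h x t) \<Longrightarrow> \<mu> \<noteq> k \<Longrightarrow> D x t \<noteq> 0
  \<Longrightarrow> px (hb \<mu> h) x t = (- (((f x t))^2 * (h x t)) / (D x t) - ((px f x t) * (Wr f h x t / (k - \<mu>))) / (D x t) + (((f x t))^3 * (Wr f h x t / (k - \<mu>))) / (D x t)^2 + (px h x t))"
  by (rule px_DERIV) (rule B1)

lemma B2:
  assumes hs: "smooth2 h" and hxx: "\<And>x t. px (px h) x t = - (\<mu> + u x t) * h x t" and mk: "\<mu> \<noteq> k"
    and Dn: "D x t \<noteq> 0"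
  shows "px (px (hb \<mu> h)) x t = (- (3 * (f x t) * (px f x t) * (h x t)) / (D x t) + ((f x t) * k * (Wr f h x t / (k - \<mu>))) / (D x t) + ((f x t) * (u x t) * (Wr f h x t / (k - \<mu>))) / (D x t) - (((f x t))^2 * (px h x t)) / (D x t) + (4 * ((f x t))^2 * (px f x t) * (Wr f h x t / (k - \<mu>))) / (D x t)^2 + (2 * ((f x t))^4 * (h x t)) / (D x t)^2 - (2 * ((f x t))^5 * (Wr f h x t / (k - \<mu>))) / (D x t)^3 - (h x t) * \<mu> - (h x t) * (u x t))"
proof -
  have "px (px (hb \<mu> h)) x t = px (\<lambda>y t. (- (((f y t))^2 * (h y t)) / (D y t) - ((px f y t) * (Wr f h y t / (k - \<mu>))) / (D y t) + (((f y t))^3 * (Wr f h y t / (k - \<mu>))) / (D y t)^2 + (px h y t))) x t"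
    by (rule px_cong[OF Dn]) (rule B1'[OF hs hxx mk])
  also have "\<dots> = (- (3 * (f x t) * (px f x t) * (h x t)) / (D x t) + ((f x t) * k * (Wr f h x t / (k - \<mu>))) / (D x t) + ((f x t) * (u x t) * (Wr f h x t / (k - \<mu>))) / (D x t) - (((f x t))^2 * (px h x t)) / (D x t) + (4 * ((f x t))^2 * (px f x t) * (Wr f h x t / (k - \<mu>))) / (D x t)^2 + (2 * ((f x t))^4 * (h x t)) / (D x t)^2 - (2 * ((f x t))^5 * (Wr f h x t / (k - \<mu>))) / (D x t)^3 - (h x t) * \<mu> - (h x t) * (u x t))"
  proof (rule px_DERIV)
    define d where "d = k - \<mu>"
    have d: "d \<noteq> 0" using mk d_def by simp
    have dl: "k = d + \<mu>" using d_def by simp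
    have dh: "((\<lambda>y. h y t) has_real_derivative px h x t) (at x)" by (rule smooth2_dx[OF hs])
    have dh1: "((\<lambda>y. px h y t) has_real_derivative - (\<mu> + u x t) * h x t) (at x)"
      using smooth2_dx[OF smooth2_px[OF hs], of t x] hxx by simp
    have df: "((\<lambda>y. f y t) has_real_derivative px f x t) (at x)" by (rule smooth2_dx[OF f_smooth])
    have df1: "((\<lambda>y. px f y t) has_real_derivative - (k + u x t) * f x t) (at x)"
      using smooth2_dx[OF smooth2_px[OF f_smooth], of t x] f_xx by simp
    have dw: "((\<lambda>y. Wr f h y t) has_real_derivative d * (f x t * h x t)) (at x)" using O1[OF hs hxx] unfolding d_def .
    show "((\<lambda>y. (- (((f y t))^2 * (h y t)) / (D y t) - ((px f y t) * (Wr f h y t / (k - \<mu>))) / (D y t) + (((f y t))^3 * (Wr f h y t / (k - \<mu>))) / (D y t)^2 + (px h y t))) has_real_derivative (- (3 * (f x t) * (px f x t) * (h x t)) / (D x t) + ((f x t) * k * (Wr f h x t / (k - \<mu>))) / (D x t) + ((f x t) * (u x t) * (Wr f h x t / (k - \<mu>))) / (D x t) - (((f x t))^2 * (px h x t)) / (D x t) + (4 * ((f x t))^2 * (px f x t) * (Wr f h x t / (k - \<mu>))) / (D x t)^2 + (2 * ((f x t))^4 * (h x t)) / (D x t)^2 - (2 * ((f x t))^5 * (Wr f h x t / (k - \<mu>))) / (D x t)^3 - (h x t) * \<mu> - (h x t) * (u x t))) (at x)"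
      unfolding d_def[symmetric]
      by (auto intro!: derivative_eq_intros dh dh1 df df1 dw D_dx simp: Dn d) (simp add: field_simps Dn d power2_eq_square numeral_eq_Suc)
  qed
  finally show ?thesis .
qed



lemma ln_abs_DERIV:
  fixes z :: real assumes z: "z \<noteq> 0"
  shows "((\<lambda>w. ln \<bar>w\<bar>) has_real_derivative 1 / z) (at z)"
proof (cases "z > 0")
  case True
  have ev: "eventually (\<lambda>w. ln w = ln \<bar>w\<bar>) (nhds z)"
    using eventually_nhds_in_open[of "{0<..}" z] True by (auto elim!: eventually_mono)
  have "(ln has_real_derivative 1 / z) (at z)" using DERIV_ln_divide True by blast
  then show ?thesis using DERIV_cong_ev[OF refl ev refl] by blast
next
  case False
  then have neg: "z < 0" using z by simp
  have ev: "eventually (\<lambda>w. ln (- w) = ln \<bar>w\<bar>) (nhds z)"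
    using eventually_nhds_in_open[of "{..<0}" z] neg by (auto elim!: eventually_mono)
  have "((\<lambda>w. ln (- w)) has_real_derivative 1 / z) (at z)"
    using neg by (auto intro!: derivative_eq_intros simp: field_simps)
  then show ?thesis using DERIV_cong_ev[OF refl ev refl] by blast
qed

definition "ubar = (\<lambda>x t. u x t + 2 * px (px (\<lambda>y r. ln \<bar>D y r\<bar>)) x t)"
definition "ub0 = (\<lambda>x t. u x t + 4 * f x t * px f x t / D x t - 2 * f x t ^ 4 / D x t ^ 2)"
definition "ub1 = (\<lambda>x t. (- (4 * ((f x t))^2 * k) / (D x t) - (4 * ((f x t))^2 * (u x t)) / (D x t) + (4 * ((px f x t))^2) / (D x t) - (12 * ((f x t))^3 * (px f x t)) / (D x t)^2 + (4 * ((f x t))^6) / (D x t)^3 + (px u x t)))"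
definition "ub2 = (\<lambda>x t. (- (16 * (f x t) * (px f x t) * k) / (D x t) - (16 * (f x t) * (px f x t) * (u x t)) / (D x t) - (4 * ((f x t))^2 * (px u x t)) / (D x t) - (40 * ((f x t))^2 * ((px f x t))^2) / (D x t)^2 + (16 * ((f x t))^4 * k) / (D x t)^2 + (16 * ((f x t))^4 * (u x t)) / (D x t)^2 + (48 * ((f x t))^5 * (px f x t)) / (D x t)^3 - (12 * ((f x t))^8) / (D x t)^4 + (px (px u) x t)))"
definition "ub3 = (\<lambda>x t. (- (24 * (f x t) * (px f x t) * (px u x t)) / (D x t) + (32 * ((f x t))^2 * k * (u x t)) / (D x t) + (16 * ((f x t))^2 * (k)^2) / (D x t) + (16 * ((f x t))^2 * ((u x t))^2) / (D x t) - (4 * ((f x t))^2 * (px (px u) x t)) / (D x t) - (16 * ((px f x t))^2 * k) / (D x t) - (16 * ((px f x t))^2 * (u x t)) / (D x t) - (80 * (f x t) * ((px f x t))^3) / (D x t)^2 + (160 * ((f x t))^3 * (px f x t) * k) / (D x t)^2 + (160 * ((f x t))^3 * (px f x t) * (u x t)) / (D x t)^2 + (20 * ((f x t))^4 * (px u x t)) / (D x t)^2 + (320 * ((f x t))^4 * ((px f x t))^2) / (D x t)^3 - (80 * ((f x t))^6 * k) / (D x t)^3 - (80 * ((f x t))^6 * (u x t)) / (D x t)^3 - (240 * ((f x t))^7 * (px f x t)) / (D x t)^4 + (48 * ((f x t))^10) / (D x t)^5 + (px (px (px u)) x t)))"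
definition "Dt = (\<lambda>x t. (s t)^2 + 4 * (px f x t)^2 + (8 * k + 2 * u x t) * (f x t)^2
   + (\<Sum>j\<in>{1..n}. ((f x t * px (Phi j) x t - px f x t * Phi j x t) / (k - lam j))^2))"

lemma D_dt': "((\<lambda>s'. D x s') has_real_derivative Dt x t) (at t)"
  unfolding Dt_def using D_dt by simp

lemma ubar_eq:
  assumes Dn: "D x t \<noteq> 0" shows "ubar x t = ub0 x t"
proof -
  have l1: "px (\<lambda>y r. ln \<bar>D y r\<bar>) y t = f y t ^ 2 / D y t" if "D y t \<noteq> 0" for y
  proof (rule px_DERIV)
    show "((\<lambda>y. ln \<bar>D y t\<bar>) has_real_derivative f y t ^ 2 / D y t) (at y)"
      using DERIV_chain2[OF ln_abs_DERIV[OF that] D_dx] by simp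
  qed
  have "px (px (\<lambda>y r. ln \<bar>D y r\<bar>)) x t = px (\<lambda>y t. f y t ^ 2 / D y t) x t"
    by (rule px_cong[OF Dn]) (rule l1)
  also have "\<dots> = 2 * f x t * px f x t / D x t - f x t ^ 4 / D x t ^ 2"
  proof (rule px_DERIV)
    have df: "((\<lambda>y. f y t) has_real_derivative px f x t) (at x)" by (rule smooth2_dx[OF f_smooth])
    show "((\<lambda>y. f y t ^ 2 / D y t) has_real_derivative 2 * f x t * px f x t / D x t - f x t ^ 4 / D x t ^ 2) (at x)"
      by (auto intro!: derivative_eq_intros df D_dx simp: Dn) (simp add: field_simps Dn power2_eq_square numeral_eq_Suc)
  qed
  finally show ?thesis unfolding ubar_def ub0_def by (simp add: field_simps)
qed

lemma ub0_dx: assumes Dn: "D x t \<noteq> 0" shows "((\<lambda>y. ub0 y t) has_real_derivative ub1 x t) (at x)"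
proof -
  have df: "((\<lambda>y. f y t) has_real_derivative px f x t) (at x)" by (rule smooth2_dx[OF f_smooth])
  have df1: "((\<lambda>y. px f y t) has_real_derivative - (k + u x t) * f x t) (at x)"
    using smooth2_dx[OF smooth2_px[OF f_smooth], of t x] f_xx by simp
  have du: "((\<lambda>y. u y t) has_real_derivative px u x t) (at x)" by (rule smooth2_dx[OF u_smooth])
  show ?thesis unfolding ub0_def ub1_def
    by (auto intro!: derivative_eq_intros df df1 du D_dx simp: Dn) (simp add: field_simps Dn power2_eq_square numeral_eq_Suc)
qed

lemma ub1_dx: assumes Dn: "D x t \<noteq> 0" shows "((\<lambda>y. ub1 y t) has_real_derivative ub2 x t) (at x)"
proof -
  have df: "((\<lambda>y. f y t) has_real_derivative px f x t) (at x)" by (rule smooth2_dx[OF f_smooth])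
  have df1: "((\<lambda>y. px f y t) has_real_derivative - (k + u x t) * f x t) (at x)"
    using smooth2_dx[OF smooth2_px[OF f_smooth], of t x] f_xx by simp
  have du: "((\<lambda>y. u y t) has_real_derivative px u x t) (at x)" by (rule smooth2_dx[OF u_smooth])
  have du1: "((\<lambda>y. px u y t) has_real_derivative px (px u) x t) (at x)" by (rule smooth2_dx[OF smooth2_px[OF u_smooth]])
  show ?thesis unfolding ub1_def ub2_def
    by (auto intro!: derivative_eq_intros df df1 du du1 D_dx simp: Dn) (simp add: field_simps Dn power2_eq_square numeral_eq_Suc)
qed

lemma ub2_dx: assumes Dn: "D x t \<noteq> 0" shows "((\<lambda>y. ub2 y t) has_real_derivative ub3 x t) (at x)"
proof -
  have df: "((\<lambda>y. f y t) has_real_derivative px f x t) (at x)" by (rule smooth2_dx[OF f_smooth])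
  have df1: "((\<lambda>y. px f y t) has_real_derivative - (k + u x t) * f x t) (at x)"
    using smooth2_dx[OF smooth2_px[OF f_smooth], of t x] f_xx by simp
  have du: "((\<lambda>y. u y t) has_real_derivative px u x t) (at x)" by (rule smooth2_dx[OF u_smooth])
  have du1: "((\<lambda>y. px u y t) has_real_derivative px (px u) x t) (at x)" by (rule smooth2_dx[OF smooth2_px[OF u_smooth]])
  have du2: "((\<lambda>y. px (px u) y t) has_real_derivative px (px (px u)) x t) (at x)"
    by (rule smooth2_dx[OF smooth2_px[OF smooth2_px[OF u_smooth]]])
  show ?thesis unfolding ub2_def ub3_def
    by (auto intro!: derivative_eq_intros df df1 du du1 du2 D_dx simp: Dn) (simp add: field_simps Dn power2_eq_square numeral_eq_Suc)
qed

lemma pub: assumes Dn: "D x t \<noteq> 0" shows "px ubar x t = ub1 x t"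
proof -
  have "px ubar x t = px ub0 x t" by (rule px_cong[OF Dn]) (rule ubar_eq)
  also have "\<dots> = ub1 x t" by (rule px_DERIV) (rule ub0_dx[OF Dn])
  finally show ?thesis .
qed

lemma ppub: assumes Dn: "D x t \<noteq> 0" shows "px (px ubar) x t = ub2 x t"
proof -
  have "px (px ubar) x t = px ub1 x t" by (rule px_cong[OF Dn]) (rule pub)
  also have "\<dots> = ub2 x t" by (rule px_DERIV) (rule ub1_dx[OF Dn])
  finally show ?thesis .
qed

lemma pppub: assumes Dn: "D x t \<noteq> 0" shows "px (px (px ubar)) x t = ub3 x t"
proof -
  have "px (px (px ubar)) x t = px ub2 x t" by (rule px_cong[OF Dn]) (rule ppub)
  also have "\<dots> = ub3 x t" by (rule px_DERIV) (rule ub2_dx[OF Dn])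
  finally show ?thesis .
qed

lemma ptub: assumes Dn: "D x t \<noteq> 0"
  shows "pt ubar x t = pt u x t + 4 * (pt f x t * px f x t + f x t * pt (px f) x t) / D x t
     - 4 * f x t * px f x t * Dt x t / D x t ^ 2 - 8 * f x t ^ 3 * pt f x t / D x t ^ 2 + 4 * f x t ^ 4 * Dt x t / D x t ^ 3"
proof -
  have "pt ubar x t = pt ub0 x t" by (rule pt_cong[OF Dn]) (rule ubar_eq)
  also have "\<dots> = pt u x t + 4 * (pt f x t * px f x t + f x t * pt (px f) x t) / D x t
     - 4 * f x t * px f x t * Dt x t / D x t ^ 2 - 8 * f x t ^ 3 * pt f x t / D x t ^ 2 + 4 * f x t ^ 4 * Dt x t / D x t ^ 3"
  proof (rule pt_DERIV)
    have df: "((\<lambda>s. f x s) has_real_derivative pt f x t) (at t)" by (rule smooth2_dt[OF f_smooth])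
    have df1: "((\<lambda>s. px f x s) has_real_derivative pt (px f) x t) (at t)" by (rule smooth2_dt[OF smooth2_px[OF f_smooth]])
    have du: "((\<lambda>s. u x s) has_real_derivative pt u x t) (at t)" by (rule smooth2_dt[OF u_smooth])
    show "((\<lambda>s. ub0 x s) has_real_derivative pt u x t + 4 * (pt f x t * px f x t + f x t * pt (px f) x t) / D x t
     - 4 * f x t * px f x t * Dt x t / D x t ^ 2 - 8 * f x t ^ 3 * pt f x t / D x t ^ 2 + 4 * f x t ^ 4 * Dt x t / D x t ^ 3) (at t)"
      unfolding ub0_def
      by (auto intro!: derivative_eq_intros df df1 du D_dt' simp: Dn) (simp add: field_simps Dn power2_eq_square numeral_eq_Suc)
  qed
  finally show ?thesis .
qed

definition "pbar = (\<lambda>x t. s t * f x t / D x t)"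

lemma P1: assumes Dn: "D x t \<noteq> 0" shows "((\<lambda>y. pbar y t) has_real_derivative (((px f x t) * (s t)) / (D x t) - (((f x t))^3 * (s t)) / (D x t)^2)) (at x)"
proof -
  have df: "((\<lambda>y. f y t) has_real_derivative px f x t) (at x)" by (rule smooth2_dx[OF f_smooth])
  show ?thesis unfolding pbar_def
    by (auto intro!: derivative_eq_intros df D_dx simp: Dn) (simp add: field_simps Dn power2_eq_square numeral_eq_Suc)
qed

lemma P1': "D x t \<noteq> 0 \<Longrightarrow> px pbar x t = (((px f x t) * (s t)) / (D x t) - (((f x t))^3 * (s t)) / (D x t)^2)" by (rule px_DERIV) (rule P1)

lemma P2: assumes Dn: "D x t \<noteq> 0" shows "px (px pbar) x t = (- ((f x t) * k * (s t)) / (D x t) - ((f x t) * (s t) * (u x t)) / (D x t) - (4 * ((f x t))^2 * (px f x t) * (s t)) / (D x t)^2 + (2 * ((f x t))^5 * (s t)) / (D x t)^3)"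
proof -
  have "px (px pbar) x t = px (\<lambda>y t. (((px f y t) * (s t)) / (D y t) - (((f y t))^3 * (s t)) / (D y t)^2)) x t" by (rule px_cong[OF Dn]) (rule P1')
  also have "\<dots> = (- ((f x t) * k * (s t)) / (D x t) - ((f x t) * (s t) * (u x t)) / (D x t) - (4 * ((f x t))^2 * (px f x t) * (s t)) / (D x t)^2 + (2 * ((f x t))^5 * (s t)) / (D x t)^3)"
  proof (rule px_DERIV)
    have df: "((\<lambda>y. f y t) has_real_derivative px f x t) (at x)" by (rule smooth2_dx[OF f_smooth])
    have df1: "((\<lambda>y. px f y t) has_real_derivative - (k + u x t) * f x t) (at x)"
      using smooth2_dx[OF smooth2_px[OF f_smooth], of t x] f_xx by simp
    show "((\<lambda>y. (((px f y t) * (s t)) / (D y t) - (((f y t))^3 * (s t)) / (D y t)^2)) has_real_derivative (- ((f x t) * k * (s t)) / (D x t) - ((f x t) * (s t) * (u x t)) / (D x t) - (4 * ((f x t))^2 * (px f x t) * (s t)) / (D x t)^2 + (2 * ((f x t))^5 * (s t)) / (D x t)^3)) (at x)"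
      by (auto intro!: derivative_eq_intros df df1 D_dx simp: Dn) (simp add: field_simps Dn power2_eq_square numeral_eq_Suc)
  qed
  finally show ?thesis .
qed







definition "Pb = (\<lambda>j. if j = Suc n then pbar else hb (lam j) (Phi j))"

lemma spatial_hb:
  assumes hs: "smooth2 h" and hxx: "\<And>x t. px (px h) x t = - (\<mu> + u x t) * h x t" and mk: "\<mu> \<noteq> k"
    and Dn: "D x t \<noteq> 0"
  shows "px (px (hb \<mu> h)) x t + (\<mu> + ubar x t) * hb \<mu> h x t = 0"
proof -
  have km: "k - \<mu> \<noteq> 0" using mk by simp
  have inst: "(- (3 * (f x t) * (px f x t) * (h x t)) / (D x t) + ((f x t) * k * (Wr f h x t / (k - \<mu>))) / (D x t) + ((f x t) * (u x t) * (Wr f h x t / (k - \<mu>))) / (D x t) - (((f x t))^2 * (px h x t)) / (D x t) + (4 * ((f x t))^2 * (px f x t) * (Wr f h x t / (k - \<mu>))) / (D x t)^2 + (2 * ((f x t))^4 * (h x t)) / (D x t)^2 - (2 * ((f x t))^5 * (Wr f h x t / (k - \<mu>))) / (D x t)^3 - (h x t) * \<mu> - (h x t) * (u x t)) + (\<mu> + ((u x t) + 4 * (f x t) * (px f x t) / (D x t) - 2 * (f x t)^4 / (D x t)^2)) * ((h x t) - (f x t) * (Wr f h x t / (k - \<mu>)) / (D x t)) = 0"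
    by (rule spatial_alg) (use Dn km in \<open>simp_all add: Wr_def\<close>)
  have e2: "hb \<mu> h x t = h x t - f x t * (Wr f h x t / (k - \<mu>)) / D x t" by (simp add: hb_def)
  show ?thesis unfolding B2[OF hs hxx mk Dn] ubar_eq[OF Dn] e2 using inst unfolding ub0_def by simp
qed

lemma spatial_pbar:
  assumes Dn: "D x t \<noteq> 0"
  shows "px (px pbar) x t + (k + ubar x t) * pbar x t = 0"
proof -
  have inst: "(- ((f x t) * k * (s t)) / (D x t) - ((f x t) * (s t) * (u x t)) / (D x t) - (4 * ((f x t))^2 * (px f x t) * (s t)) / (D x t)^2 + (2 * ((f x t))^5 * (s t)) / (D x t)^3) + (k + ((u x t) + 4 * (f x t) * (px f x t) / (D x t) - 2 * (f x t)^4 / (D x t)^2)) * ((s t) * (f x t) / (D x t)) = 0"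
    by (rule spatialp_alg) (use Dn in simp)
  have e2: "pbar x t = s t * f x t / D x t" by (simp add: pbar_def)
  show ?thesis unfolding P2[OF Dn] ubar_eq[OF Dn] e2 using inst unfolding ub0_def by simp
qed

lemma time_hb:
  assumes ls: "laxsol lm \<phi>" and lmn: "lm \<notin> lam ` {1..Suc n}" and Dn: "D x t \<noteq> 0"
  shows "pt (hb lm \<phi>) x t = Aop (Suc n) lam lm ubar Pb (hb lm \<phi>) x t"
proof -
  have hs: "smooth2 \<phi>" using ls unfolding laxsol_def by auto
  have mk: "lm \<noteq> k" using lmn by force
  have LA: "\<forall>j\<in>{1..n}. lam j \<noteq> k \<and> lam j \<noteq> lm" using lam_ne lmn by force
  have hxx: "\<And>x t. px (px \<phi>) x t = - (lm + u x t) * \<phi> x t" by (rule L1[OF ls])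
  have B3: "pt (hb lm \<phi>) x t = pt \<phi> x t - (pt f x t * (Wr f \<phi> x t / (k - lm)) + f x t * (4 * px f x t * px \<phi> x t + (4 * k + 4 * lm + 2 * u x t) * f x t * \<phi> x t + (\<Sum>j\<in>{1..n}. ((f x t * px (Phi j) x t - px f x t * Phi j x t) / (k - lam j)) * ((Phi j x t * px \<phi> x t - px (Phi j) x t * \<phi> x t) / (lam j - lm))))) / D x t
      + f x t * (Wr f \<phi> x t / (k - lm)) * Dt x t / D x t ^ 2"
  proof (rule pt_DERIV)
    have dh: "((\<lambda>s. \<phi> x s) has_real_derivative pt \<phi> x t) (at t)" by (rule smooth2_dt[OF hs])
    have df: "((\<lambda>s. f x s) has_real_derivative pt f x t) (at t)" by (rule smooth2_dt[OF f_smooth])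
    define wfun where "wfun s = Wr f \<phi> x s / (k - lm)" for s
    have dw: "(wfun has_real_derivative 4 * px f x t * px \<phi> x t + (4 * k + 4 * lm + 2 * u x t) * f x t * \<phi> x t + (\<Sum>j\<in>{1..n}. ((f x t * px (Phi j) x t - px f x t * Phi j x t) / (k - lam j)) * ((Phi j x t * px \<phi> x t - px (Phi j) x t * \<phi> x t) / (lam j - lm)))) (at t)" unfolding wfun_def by (rule O2[OF ls mk])
    have eq: "(\<lambda>s. hb lm \<phi> x s) = (\<lambda>s. \<phi> x s - f x s * wfun s / D x s)" unfolding hb_def wfun_def by simp
    show "((\<lambda>s. hb lm \<phi> x s) has_real_derivative pt \<phi> x t - (pt f x t * (Wr f \<phi> x t / (k - lm)) + f x t * (4 * px f x t * px \<phi> x t + (4 * k + 4 * lm + 2 * u x t) * f x t * \<phi> x t + (\<Sum>j\<in>{1..n}. ((f x t * px (Phi j) x t - px f x t * Phi j x t) / (k - lam j)) * ((Phi j x t * px \<phi> x t - px (Phi j) x t * \<phi> x t) / (lam j - lm))))) / D x t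
      + f x t * (Wr f \<phi> x t / (k - lm)) * Dt x t / D x t ^ 2) (at t)"
      unfolding eq wfun_def[symmetric]
      by (auto intro!: derivative_eq_intros dh df dw D_dt' simp: Dn) (simp add: field_simps Dn power2_eq_square)
  qed
  have inst: "((px u x t) * (\<phi> x t) + (4 * lm - 2 * (u x t)) * (px \<phi> x t) + (\<Sum>j\<in>{1..n}. Phi j x t / (lam j - lm) * (Phi j x t * (px \<phi> x t) - px (Phi j) x t * (\<phi> x t)))) - (((px u x t) * (f x t) + (4 * k - 2 * (u x t)) * (px f x t) + (\<Sum>j\<in>{1..n}. Phi j x t / (lam j - k) * (Phi j x t * (px f x t) - px (Phi j) x t * (f x t)))) * ((f x t * px \<phi> x t - px f x t * \<phi> x t) / (k - lm)) + (f x t) * (4 * (px f x t) * (px \<phi> x t) + (4 * k + 4 * lm + 2 * (u x t)) * (f x t) * (\<phi> x t) + (\<Sum>j\<in>{1..n}. (((f x t) * px (Phi j) x t - (px f x t) * Phi j x t) / (k - lam j)) * ((Phi j x t * (px \<phi> x t) - px (Phi j) x t * (\<phi> x t)) / (lam j - lm))))) / (D x t) + (f x t) * ((f x t * px \<phi> x t - px f x t * \<phi> x t) / (k - lm)) * ((s t)^2 + 4 * (px f x t)^2 + (8 * k + 2 * (u x t)) * (f x t)^2 + (\<Sum>j\<in>{1..n}. (((f x t) * px (Phi j) x t - (px f x t) * Phi j x t) / (k - lam j)) ^ 2)) / (D x t)^2 = (- (4 * ((f x t))^2 * k) / (D x t) - (4 * ((f x t))^2 * (u x t)) / (D x t) +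 (4 * ((px f x t))^2) / (D x t) - (12 * ((f x t))^3 * (px f x t)) / (D x t)^2 + (4 * ((f x t))^6) / (D x t)^3 + (px u x t)) * ((\<phi> x t) - (f x t) * ((f x t * px \<phi> x t - px f x t * \<phi> x t) / (k - lm)) / (D x t)) + (4 * lm - 2 * ((u x t) + 4 * (f x t) * (px f x t) / (D x t) - 2 * (f x t)^4 / (D x t)^2)) * (- (((f x t))^2 * (\<phi> x t)) / (D x t) - ((px f x t) * ((f x t * px \<phi> x t - px f x t * \<phi> x t) / (k - lm))) / (D x t) + (((f x t))^3 * ((f x t * px \<phi> x t - px f x t * \<phi> x t) / (k - lm))) / (D x t)^2 + (px \<phi> x t)) + (\<Sum>j\<in>{1..n}. (Phi j x t - (f x t) * (((f x t) * px (Phi j) x t - (px f x t) * Phi j x t) / (k - lam j)) / (D x t)) / (lam j - lm) * ((Phi j x t - (f x t) * (((f x t) * px (Phi j) x t - (px f x t) * Phi j x t) / (k - lam j)) / (D x t)) * (- (((f x t))^2 * (\<phi> x t)) / (D x t) - ((px f x t) * ((f x t * px \<phi> x t - px f x t * \<phi> x t) / (k - lm))) / (D x t) + (((f x t))^3 * ((f x t * px \<phi> x t - px f x t * \<phi> x t) / (k - lm))) / (D x t)^2 + (px \<phi> x t)) - (- (((f x t))^2 * Phi j x t) / (D x t) - ((px f x t) * (((f x t) * px (Phi j) x t - (px f x t) * Phi j x t) / (k - lam j))) / (D x t) + (((f x t))^3 * (((f x t) * px (Phi j) x t - (px f x t) * Phi j x t) / (k - lam j))) / (D x t)^2 + px (Phi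 j) x t) * ((\<phi> x t) - (f x t) * ((f x t * px \<phi> x t - px f x t * \<phi> x t) / (k - lm)) / (D x t)))) + ((s t) * (f x t) / (D x t)) / (k - lm) * (((s t) * (f x t) / (D x t)) * (- (((f x t))^2 * (\<phi> x t)) / (D x t) - ((px f x t) * ((f x t * px \<phi> x t - px f x t * \<phi> x t) / (k - lm))) / (D x t) + (((f x t))^3 * ((f x t * px \<phi> x t - px f x t * \<phi> x t) / (k - lm))) / (D x t)^2 + (px \<phi> x t)) - (((px f x t) * (s t)) / (D x t) - (((f x t))^3 * (s t)) / (D x t)^2) * ((\<phi> x t) - (f x t) * ((f x t * px \<phi> x t - px f x t * \<phi> x t) / (k - lm)) / (D x t)))"
    by (rule laxt_alg) (use Dn mk LA in \<open>simp_all add: field_simps\<close>)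
  have S: "(\<Sum>j = 1..Suc n. Pb j x t / (lam j - lm) * Wr (Pb j) (hb lm \<phi>) x t)
     = (\<Sum>j\<in>{1..n}. hb (lam j) (Phi j) x t / (lam j - lm) * (hb (lam j) (Phi j) x t * px (hb lm \<phi>) x t - px (hb (lam j) (Phi j)) x t * hb lm \<phi> x t))
       + pbar x t / (k - lm) * (pbar x t * px (hb lm \<phi>) x t - px pbar x t * hb lm \<phi> x t)"
    by (auto simp: Pb_def Wr_def intro!: sum.cong)
  have S2: "\<And>j. j \<in> {1..n} \<Longrightarrow> px (hb (lam j) (Phi j)) x t = (- (((f x t))^2 * (Phi j) x t) / (D x t) - ((px f x t) * (Wr f (Phi j) x t / (k - lam j))) / (D x t) + (((f x t))^3 * (Wr f (Phi j) x t / (k - lam j))) / (D x t)^2 + (px (Phi j) x t))"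
    by (rule B1'[OF Phi_sm Phi_xx _ Dn]) (auto simp: lam_ne)
  have S3: "(\<Sum>j\<in>{1..n}. hb (lam j) (Phi j) x t / (lam j - lm) * (hb (lam j) (Phi j) x t * px (hb lm \<phi>) x t - px (hb (lam j) (Phi j)) x t * hb lm \<phi> x t))
     = (\<Sum>j\<in>{1..n}. hb (lam j) (Phi j) x t / (lam j - lm) * (hb (lam j) (Phi j) x t * px (hb lm \<phi>) x t - ((- (((f x t))^2 * (Phi j) x t) / (D x t) - ((px f x t) * (Wr f (Phi j) x t / (k - lam j))) / (D x t) + (((f x t))^3 * (Wr f (Phi j) x t / (k - lam j))) / (D x t)^2 + (px (Phi j) x t))) * hb lm \<phi> x t))"
    by (rule sum.cong) (simp_all add: S2)
  have L: "pt (hb lm \<phi>) x t = ((px u x t) * (\<phi> x t) + (4 * lm - 2 * (u x t)) * (px \<phi> x t) + (\<Sum>j\<in>{1..n}. Phi j x t / (lam j - lm) * (Phi j x t * (px \<phi> x t) - px (Phi j) x t * (\<phi> x t)))) - (((px u x t) * (f x t) + (4 * k - 2 * (u x t)) * (px f x t) + (\<Sum>j\<in>{1..n}. Phi j x t / (lam j - k) * (Phi j x t * (px f x t) - px (Phi j) x t * (f x t)))) * ((f x t * px \<phi> x t - px f x t * \<phi> x t) / (k - lm)) + (f x t) * (4 * (px f x t) * (px \<phi> x t) + (4 * k + 4 * lm + 2 * (u x t)) * (f x t) * (\<phi> x t) + (\<Sum>j\<in>{1..n}. (((f x t) * px (Phi j) x t - (px f x t) * Phi j x t) / (k - lam j))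 * ((Phi j x t * (px \<phi> x t) - px (Phi j) x t * (\<phi> x t)) / (lam j - lm))))) / (D x t) + (f x t) * ((f x t * px \<phi> x t - px f x t * \<phi> x t) / (k - lm)) * ((s t)^2 + 4 * (px f x t)^2 + (8 * k + 2 * (u x t)) * (f x t)^2 + (\<Sum>j\<in>{1..n}. (((f x t) * px (Phi j) x t - (px f x t) * Phi j x t) / (k - lam j)) ^ 2)) / (D x t)^2"
    unfolding B3 L2[OF ls] L2[OF f_laxsol] Dt_def Wr_def by (rule refl)
  have R: "Aop (Suc n) lam lm ubar Pb (hb lm \<phi>) x t = (- (4 * ((f x t))^2 * k) / (D x t) - (4 * ((f x t))^2 * (u x t)) / (D x t) + (4 * ((px f x t))^2) / (D x t) - (12 * ((f x t))^3 * (px f x t)) / (D x t)^2 + (4 * ((f x t))^6) / (D x t)^3 + (px u x t)) * ((\<phi> x t) - (f x t) * ((f x t * px \<phi> x t - px f x t * \<phi> x t) / (k - lm)) / (D x t)) + (4 * lm - 2 * ((u x t) + 4 * (f x t) * (px f x t) / (D x t) - 2 * (f x t)^4 / (D x t)^2)) * (- (((f x t))^2 * (\<phi> x t)) / (D x t) - ((px f x t) * ((f x t * px \<phi> x t - px f x t * \<phi> x t) / (k - lm))) / (D x t) + (((f x t))^3 * ((f x t * px \<phi> x t - px f x t * \<phi> x t) / (k - lm))) / (D x t)^2 + (px \<phi> x t)) + (\<Sum>j\<in>{1..n}. (Phi j x t - (f x t) * (((f x t) * px (Phi j) x t - (px f x t) * Phi j x t) / (k - lam j)) / (D x t)) / (lam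 j - lm) * ((Phi j x t - (f x t) * (((f x t) * px (Phi j) x t - (px f x t) * Phi j x t) / (k - lam j)) / (D x t)) * (- (((f x t))^2 * (\<phi> x t)) / (D x t) - ((px f x t) * ((f x t * px \<phi> x t - px f x t * \<phi> x t) / (k - lm))) / (D x t) + (((f x t))^3 * ((f x t * px \<phi> x t - px f x t * \<phi> x t) / (k - lm))) / (D x t)^2 + (px \<phi> x t)) - (- (((f x t))^2 * Phi j x t) / (D x t) - ((px f x t) * (((f x t) * px (Phi j) x t - (px f x t) * Phi j x t) / (k - lam j))) / (D x t) + (((f x t))^3 * (((f x t) * px (Phi j) x t - (px f x t) * Phi j x t) / (k - lam j))) / (D x t)^2 + px (Phi j) x t) * ((\<phi> x t) - (f x t) * ((f x t * px \<phi> x t - px f x t * \<phi> x t) / (k - lm)) / (D x t)))) + ((s t) * (f x t) / (D x t)) / (k - lm) * (((s t) * (f x t) / (D x t)) * (- (((f x t))^2 * (\<phi> x t)) / (D x t) - ((px f x t) * ((f x t * px \<phi> x t - px f x t * \<phi> x t) / (k - lm))) / (D x t) + (((f x t))^3 * ((f x t * px \<phi> x t - px f x t * \<phi> x t) / (k - lm))) / (D x t)^2 + (px \<phi> x t)) - (((px f x t) * (s t)) / (D x t) - (((f x t))^3 * (s t)) / (D x t)^2) * ((\<phi> x t) - (f x t) * ((f x t * px \<phi> x t - px f x t * \<phi> x t) / (k - lm)) / (D x t)))"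
    unfolding Aop_def S unfolding S3 unfolding pub[OF Dn] ubar_eq[OF Dn] P1'[OF Dn] B1'[OF hs hxx mk Dn]
    unfolding ub0_def ub1_def hb_def pbar_def Wr_def by (simp only: add.assoc)
  show ?thesis using inst L R by simp
qed

lemma kdv_final:
  assumes Dn: "D x t \<noteq> 0"
  shows "pt ubar x t + 6 * ubar x t * px ubar x t + px (px (px ubar)) x t
     + 4 * (\<Sum>j = 1..Suc n. Pb j x t * px (Pb j) x t) = 0"
proof -
  have LA: "\<forall>j\<in>{1..n}. lam j \<noteq> k" using lam_ne by force
  have inst: "(- (6 * (u x t) * (px u x t) + (px (px (px u)) x t) + 4 * (\<Sum>j\<in>{1..n}. Phi j x t * px (Phi j) x t))) + 4 * (((px u x t) * (f x t) + (4 * k - 2 * (u x t)) * (px f x t) + (\<Sum>j\<in>{1..n}. Phi j x t / (lam j - k) * (Phi j x t * (px f x t) - px (Phi j) x t * (f x t)))) * (px f x t) + (f x t) * ((px (px u) x t) * (f x t) - (px u x t) * (px f x t) - (4 * k - 2 * (u x t)) * (k + (u x t)) * (f x t) + (\<Sum>j\<in>{1..n}. px (Phi j) x t / (lam j - k) * (Phi j x t * (px f x t) - px (Phi j) x t * (f x t)) + Phi j x t ^ 2 * (f x t)))) / (D x t) - 4 * (f x t) * (px f x t) * ((s t)^2 + 4 * (px f x t)^2 + (8 * k + 2 * (u x t)) * (f x t)^2 + (\<Sum>j\<in>{1..n}. (((f x t) * px (Phi j) x t - (px f x t) * Phi j x t) / (k - lam j)) ^ 2)) / (D x t)^2 - 8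 * (f x t)^3 * ((px u x t) * (f x t) + (4 * k - 2 * (u x t)) * (px f x t) + (\<Sum>j\<in>{1..n}. Phi j x t / (lam j - k) * (Phi j x t * (px f x t) - px (Phi j) x t * (f x t)))) / (D x t)^2 + 4 * (f x t)^4 * ((s t)^2 + 4 * (px f x t)^2 + (8 * k + 2 * (u x t)) * (f x t)^2 + (\<Sum>j\<in>{1..n}. (((f x t) * px (Phi j) x t - (px f x t) * Phi j x t) / (k - lam j)) ^ 2)) / (D x t)^3 + 6 * ((u x t) + 4 * (f x t) * (px f x t) / (D x t) - 2 * (f x t)^4 / (D x t)^2) * (- (4 * ((f x t))^2 * k) / (D x t) - (4 * ((f x t))^2 * (u x t)) / (D x t) + (4 * ((px f x t))^2) / (D x t) - (12 * ((f x t))^3 * (px f x t)) / (D x t)^2 + (4 * ((f x t))^6) / (D x t)^3 + (px u x t)) + (- (24 * (f x t) * (px f x t) * (px u x t)) / (D x t) + (32 * ((f x t))^2 * k * (u x t)) / (D x t) + (16 * ((f x t))^2 * (k)^2) / (D x t) + (16 * ((f x t))^2 * ((u x t))^2) / (D x t) - (4 * ((f x t))^2 * (px (px u) x t)) / (D x t) - (16 * ((px f x t))^2 * k) / (D x t) - (16 * ((px f x t))^2 * (u x t)) / (D x t) - (80 * (f x t) * ((px f x t))^3) / (D x t)^2 + (160 * ((f x t))^3 * (px f x t) * k) / (D x t)^2 + (160 * ((f x t))^3 * (px f x t) * (u x t)) / (D x t)^2 + (20 * ((f x t))^4 * (px u x t)) / (D x t)^2 + (320 * ((f x t))^4 * ((px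 f x t))^2) / (D x t)^3 - (80 * ((f x t))^6 * k) / (D x t)^3 - (80 * ((f x t))^6 * (u x t)) / (D x t)^3 - (240 * ((f x t))^7 * (px f x t)) / (D x t)^4 + (48 * ((f x t))^10) / (D x t)^5 + (px (px (px u)) x t)) + 4 * ((\<Sum>j\<in>{1..n}. (Phi j x t - (f x t) * (((f x t) * px (Phi j) x t - (px f x t) * Phi j x t) / (k - lam j)) / (D x t)) * (- (((f x t))^2 * Phi j x t) / (D x t) - ((px f x t) * (((f x t) * px (Phi j) x t - (px f x t) * Phi j x t) / (k - lam j))) / (D x t) + (((f x t))^3 * (((f x t) * px (Phi j) x t - (px f x t) * Phi j x t) / (k - lam j))) / (D x t)^2 + px (Phi j) x t)) + ((s t) * (f x t) / (D x t)) * (((px f x t) * (s t)) / (D x t) - (((f x t))^3 * (s t)) / (D x t)^2)) = 0"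
    by (rule kdv_alg) (use Dn LA in simp_all)
  have S2: "\<And>j. j \<in> {1..n} \<Longrightarrow> px (hb (lam j) (Phi j)) x t = (- (((f x t))^2 * (Phi j) x t) / (D x t) - ((px f x t) * (Wr f (Phi j) x t / (k - lam j))) / (D x t) + (((f x t))^3 * (Wr f (Phi j) x t / (k - lam j))) / (D x t)^2 + (px (Phi j) x t))"
    by (rule B1'[OF Phi_sm Phi_xx _ Dn]) (auto simp: lam_ne)
  have S: "(\<Sum>j = 1..Suc n. Pb j x t * px (Pb j) x t)
     = (\<Sum>j\<in>{1..n}. hb (lam j) (Phi j) x t * ((- (((f x t))^2 * (Phi j) x t) / (D x t) - ((px f x t) * (Wr f (Phi j) x t / (k - lam j))) / (D x t) + (((f x t))^3 * (Wr f (Phi j) x t / (k - lam j))) / (D x t)^2 + (px (Phi j) x t)))) + pbar x t * px pbar x t"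
    by (auto simp: Pb_def S2 intro!: sum.cong)
  show ?thesis
    unfolding S ptub[OF Dn] pppub[OF Dn] pub[OF Dn] ubar_eq[OF Dn] P1'[OF Dn] u_t L2[OF f_laxsol] L3[OF f_laxsol]
    using inst unfolding Dt_def ub0_def ub1_def ub3_def hb_def pbar_def Wr_def by simp
qed

end

theorem theorem2p1:
  fixes n :: nat and lam :: "nat \<Rightarrow> real" and u :: fn2 and Phi :: "nat \<Rightarrow> fn2"
    and F :: fn3 and e s :: "real \<Rightarrow> real"
    and f \<omega>ff D ubar :: fn2 and Phibar :: "nat \<Rightarrow> fn2" and U :: "(real \<times> real) set"
  assumes distinct: "inj_on lam {1..Suc n}"
    and u_smooth: "smooth2 u"
    and Phi_smooth: "\<forall>j \<in> {1..n}. smooth2 (Phi j)"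
    and kdvs: "kdvs_on UNIV n lam u Phi"
    and family: "\<exists>\<delta>>0. smooth3_on (ball (lam (Suc n)) \<delta>) F \<and>
        (\<forall>\<xi> \<in> ball (lam (Suc n)) \<delta>. \<xi> \<notin> lam ` {1..n} \<longrightarrow>
            smooth2 (F \<xi>) \<and> lax_sys_on UNIV n lam u Phi \<xi> (F \<xi>))"
    and e_diff: "\<forall>t. e differentiable at t"
    and s_smooth: "smooth1 s"
    and s_sqrt: "\<forall>t. (s t)\<^sup>2 = deriv e t"
  defines "f \<equiv> F (lam (Suc n))"
    and "\<omega>ff \<equiv> (\<lambda>x t. - Wr f (pxi3 F (lam (Suc n))) x t)"
    and "D \<equiv> (\<lambda>x t. e t + \<omega>ff x t)"
    and "U \<equiv> {(x, t). D x t \<noteq> 0}"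
    and "ubar \<equiv> (\<lambda>x t. u x t + 2 * px (px (\<lambda>y r. ln \<bar>D y r\<bar>)) x t)"
    and "Phibar \<equiv> (\<lambda>j. if j = Suc n then (\<lambda>x t. s t * f x t / D x t)
             else (\<lambda>x t. Phi j x t
                     - f x t * (Wr f (Phi j) x t / (lam (Suc n) - lam j)) / D x t))"
  shows "(\<forall>(lm::real) \<phi>. lm \<notin> lam ` {1..Suc n} \<longrightarrow> smooth2 \<phi> \<longrightarrow>
            lax_sys_on UNIV n lam u Phi lm \<phi> \<longrightarrow>
            lax_sys_on U (Suc n) lam ubar Phibar lm
              (\<lambda>x t. \<phi> x t - f x t * (Wr f \<phi> x t / (lam (Suc n) - lm)) / D x t))
         \<and> kdvs_on U (Suc n) lam ubar Phibar"
proof -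
  interpret K: kdvset n lam u Phi F e s
    using distinct u_smooth Phi_smooth kdvs family e_diff s_sqrt by (rule kdvset.intro)
  have fK: "f = F (lam (Suc n))" unfolding f_def ..
  have DK: "D = K.D" unfolding D_def \<omega>ff_def K.D_def K.wff_def f_def ..
  have UK: "U = {(x, t). K.D x t \<noteq> 0}" unfolding U_def DK ..
  have ubK: "ubar = K.ubar" unfolding ubar_def K.ubar_def DK ..
  have PbK: "Phibar = K.Pb"
    unfolding Phibar_def K.Pb_def K.pbar_def K.hb_def DK fK by (intro ext) simp
  have hbK: "(\<lambda>x t. \<phi> x t - f x t * (Wr f \<phi> x t / (lam (Suc n) - lm)) / D x t) = K.hb lm \<phi>" for lm \<phi>
    unfolding K.hb_def DK fK ..
  show ?thesis
  proof
    show "\<forall>(lm::real) \<phi>. lm \<notin> lam ` {1..Suc n} \<longrightarrow> smooth2 \<phi> \<longrightarrow>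
            lax_sys_on UNIV n lam u Phi lm \<phi> \<longrightarrow>
            lax_sys_on U (Suc n) lam ubar Phibar lm
              (\<lambda>x t. \<phi> x t - f x t * (Wr f \<phi> x t / (lam (Suc n) - lm)) / D x t)"
    proof (intro allI impI)
      fix lm :: real and \<phi> :: fn2
      assume lmn: "lm \<notin> lam ` {1..Suc n}" and hs: "smooth2 \<phi>" and lx: "lax_sys_on UNIV n lam u Phi lm \<phi>"
      have ls: "K.laxsol lm \<phi>" unfolding K.laxsol_def using lmn hs lx by auto
      have mk: "lm \<noteq> lam (Suc n)" using lmn by force
      show "lax_sys_on U (Suc n) lam ubar Phibar lm
              (\<lambda>x t. \<phi> x t - f x t * (Wr f \<phi> x t / (lam (Suc n) - lm)) / D x t)"
        unfolding hbK UK ubK PbK lax_sys_on_def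
      proof (intro allI impI conjI)
        fix x t assume "(x, t) \<in> {(x, t). K.D x t \<noteq> 0}"
        then have Dn: "K.D x t \<noteq> 0" by simp
        show "px (px (K.hb lm \<phi>)) x t + (lm + K.ubar x t) * K.hb lm \<phi> x t = 0"
          by (rule K.spatial_hb[OF hs K.L1[OF ls] mk Dn])
        show "pt (K.hb lm \<phi>) x t = Aop (Suc n) lam lm K.ubar K.Pb (K.hb lm \<phi>) x t"
          by (rule K.time_hb[OF ls lmn Dn])
      qed
    qed
    show "kdvs_on U (Suc n) lam ubar Phibar"
      unfolding UK ubK PbK kdvs_on_def
    proof (intro allI impI conjI ballI)
      fix x t assume "(x, t) \<in> {(x, t). K.D x t \<noteq> 0}"
      then have Dn: "K.D x t \<noteq> 0" by simp
      show "pt K.ubar x t + 6 * K.ubar x t * px K.ubar x t + px (px (px K.ubar)) x t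
          + 4 * (\<Sum>j = 1..Suc n. K.Pb j x t * px (K.Pb j) x t) = 0"
        by (rule K.kdv_final[OF Dn])
      fix j assume j: "j \<in> {1..Suc n}"
      show "px (px (K.Pb j)) x t + (lam j + K.ubar x t) * K.Pb j x t = 0"
      proof (cases "j = Suc n")
        case True
        then show ?thesis unfolding K.Pb_def using K.spatial_pbar[OF Dn] by simp
      next
        case False
        then have j': "j \<in> {1..n}" using j by auto
        have "px (px (K.hb (lam j) (Phi j))) x t + (lam j + K.ubar x t) * K.hb (lam j) (Phi j) x t = 0"
          by (rule K.spatial_hb[OF K.Phi_sm[OF j'] K.Phi_xx[OF j'] K.lam_ne[OF j'] Dn])
        then show ?thesis unfolding K.Pb_def using False by simp
      qed
    qed
  qed
qed

end
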